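(* Let $x\in\{\text{complete},\text{preferred},\text{semi-stable},\text{stage},\text{stage2},\text{CF2},\text{grounded},\text{ideal},\text{eager}\}$. For every two argumentation frameworks $AF=(AR,Attacks)$ and $AF'=(AR',Attacks')$ such that $AF\preceq_{RM}AF'$: $$\forall E\in\sigma_x(AF)\ \exists E'\in\sigma_x(AF') \text{ such that } (E'\not\subseteq AR\ \lor\ E'=E).$$
   Context: An argumentation framework is a pair $AF=(AR,Attacks)$ with $AR$ finite and $Attacks\subseteq AR\times AR$; $a$ attacks $b$ iff $(a,b)\in Attacks$; $S$ attacks $b$ iff some element of $S$ attacks $b$. $AF\preceq_N AF'$ (normal expansion) iff $AR\subseteq AR'$, $Attacks\subseteq Attacks'$ and no $(a,b)\in Attacks'\setminus Attacks$ has $a,b\in AR$. Attack sequence: $\langle a_1,\dots,a_n\rangle$ of pairwise distinct arguments with $(a_i,a_{i+1})\in Attacks$; $b$ is reachable from $a$ iff such a sequence has $a_1=a,a_n=b$. An attack cycle is a sequence $\langle a_1,\dots,a_n\rangle$ with $(a_i,a_{i+1})\in Attacks$ for $1\le i\le n-1$, $a_1=a_n$, and $a_1,\dots,a_{n-1}$ pairwise distinct; $\mathcal C(AF)$ is the set of attack cycles of $AF$. $AF\preceq_{RM}AF'$ (rational man's expansion) iff (1) $AF\preceq_N AF'$; (2) $\mathcal C(AF')=\mathcal C(AF)$; (3) for all $a\in AR$ and $b\in AR'\setminus AR$ such that $b$ is reachable from $a$ in $AF'$, $a$ occurs in no attack cycle of $AF'$. Semantics: $S$ is conflict-free iff no element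 of $S$ attacks an element of $S$; $a$ is acceptable w.r.t. $S$ iff every attacker of $a$ is attacked by $S$; a conflict-free $S$ is admissible iff all its elements are acceptable w.r.t. $S$; $S^+=\{b:\text{some }a\in S\text{ attacks }b\}$. Among admissible sets: complete = contains every argument acceptable w.r.t. it; preferred = $\subseteq$-maximal admissible; grounded = $\subseteq$-minimal complete; ideal = $\subseteq$-maximal admissible set contained in every preferred extension; semi-stable = complete with $\subseteq$-maximal $S\cup S^+$ among complete extensions; eager = $\subseteq$-maximal admissible set contained in every semi-stable extension. Naive = $\subseteq$-maximal conflict-free; stage = conflict-free $S$ with no conflict-free $S'$ such that $S'\cup S'^+\supsetneq S\cup S^+$. SCCs: maximal sets of mutually reachable arguments ($SCCS_{AF}$); $AF\downarrow_S=(S,Attacks\cap(S\times S))$; for SCC $S$ and $E\subseteq AR$: $S^-_{out}=\{a\notin S: a\text{ attacks some element of }S\}$, $D_{AF}(S,E)=\{a\in S: E\cap S^-_{out}\text{ attacks }a\}$, $UP_{AF}(S,E)=S\setminus D_{AF}(S,E)$. CF2 (resp. stage2): $E$ is an extension of $AF$ iff either $|SCCS_{AF}|=1$ and $E$ is naive (resp. stage), or for every $S\in SCCS_{AF}$, $E\cap S$ is a CF2 (resp. stage2) extension of $AF\downarrow_{UP_{AF}(S,E)}$. $\sigma_x(AF)$ is the set of all $x$-extensions of $AF$. *)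

theory Defs
  imports Main
begin

definition wf_AF :: "'a set \<Rightarrow> ('a \<times> 'a) set \<Rightarrow> bool" where
  "wf_AF AR Att \<longleftrightarrow> finite AR \<and> Att \<subseteq> AR \<times> AR"

definition normal_expansion ::
  "'a set \<Rightarrow> ('a \<times> 'a) set \<Rightarrow> 'a set \<Rightarrow> ('a \<times> 'a) set \<Rightarrow> bool" where
  "normal_expansion AR Att AR' Att' \<longleftrightarrow>
     AR \<subseteq> AR' \<and> Att \<subseteq> Att' \<and> (\<forall>(a,b) \<in> Att' - Att. \<not> (a \<in> AR \<and> b \<in> AR))"

definition attack_seq :: "('a \<times> 'a) set \<Rightarrow> 'a list \<Rightarrow> bool" where
  "attack_seq Att xs \<longleftrightarrow> xs \<noteq> [] \<and> distinct xs \<and>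
     (\<forall>i. Suc i < length xs \<longrightarrow> (xs ! i, xs ! Suc i) \<in> Att)"

definition reachable :: "('a \<times> 'a) set \<Rightarrow> 'a \<Rightarrow> 'a \<Rightarrow> bool" where
  "reachable Att a b \<longleftrightarrow> (\<exists>xs. attack_seq Att xs \<and> hd xs = a \<and> last xs = b)"

definition attack_cycle :: "('a \<times> 'a) set \<Rightarrow> 'a list \<Rightarrow> bool" where
  "attack_cycle Att xs \<longleftrightarrow> length xs \<ge> 2 \<and> hd xs = last xs \<and> distinct (butlast xs) \<and>
     (\<forall>i. Suc i < length xs \<longrightarrow> (xs ! i, xs ! Suc i) \<in> Att)"

definition cycles :: "('a \<times> 'a) set \<Rightarrow> 'a list set" where
  "cycles Att = {xs. attack_cycle Att xs}"

definition rm_expansion ::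
  "'a set \<Rightarrow> ('a \<times> 'a) set \<Rightarrow> 'a set \<Rightarrow> ('a \<times> 'a) set \<Rightarrow> bool" where
  "rm_expansion AR Att AR' Att' \<longleftrightarrow>
     normal_expansion AR Att AR' Att' \<and>
     cycles Att' = cycles Att \<and>
     (\<forall>a \<in> AR. \<forall>b \<in> AR' - AR. reachable Att' a b \<longrightarrow>
        (\<forall>xs \<in> cycles Att'. a \<notin> set xs))"

definition conflict_free :: "('a \<times> 'a) set \<Rightarrow> 'a set \<Rightarrow> bool" where
  "conflict_free Att S \<longleftrightarrow> (\<forall>a \<in> S. \<forall>b \<in> S. (a, b) \<notin> Att)"

definition acceptable :: "('a \<times> 'a) set \<Rightarrow> 'a \<Rightarrow> 'a set \<Rightarrow> bool" where
  "acceptable Att a S \<longleftrightarrow> (\<forall>b. (b, a) \<in> Att \<longrightarrow> (\<exists>c \<in> S. (c, b) \<in> Att))"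

definition plus :: "('a \<times> 'a) set \<Rightarrow> 'a set \<Rightarrow> 'a set" where
  "plus Att S = {b. \<exists>a \<in> S. (a, b) \<in> Att}"

definition admissible :: "'a set \<Rightarrow> ('a \<times> 'a) set \<Rightarrow> 'a set \<Rightarrow> bool" where
  "admissible AR Att S \<longleftrightarrow> S \<subseteq> AR \<and> conflict_free Att S \<and> (\<forall>a \<in> S. acceptable Att a S)"

definition complete_ext :: "'a set \<Rightarrow> ('a \<times> 'a) set \<Rightarrow> 'a set \<Rightarrow> bool" where
  "complete_ext AR Att S \<longleftrightarrow> admissible AR Att S \<and> (\<forall>a \<in> AR. acceptable Att a S \<longrightarrow> a \<in> S)"

definition preferred_ext :: "'a set \<Rightarrow> ('a \<times> 'a) set \<Rightarrow> 'a set \<Rightarrow> bool" where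
  "preferred_ext AR Att S \<longleftrightarrow> admissible AR Att S \<and>
     (\<forall>T. admissible AR Att T \<and> S \<subseteq> T \<longrightarrow> T = S)"

definition grounded_ext :: "'a set \<Rightarrow> ('a \<times> 'a) set \<Rightarrow> 'a set \<Rightarrow> bool" where
  "grounded_ext AR Att S \<longleftrightarrow> complete_ext AR Att S \<and>
     (\<forall>T. complete_ext AR Att T \<and> T \<subseteq> S \<longrightarrow> T = S)"

definition ideal_ext :: "'a set \<Rightarrow> ('a \<times> 'a) set \<Rightarrow> 'a set \<Rightarrow> bool" where
  "ideal_ext AR Att S \<longleftrightarrow>
     admissible AR Att S \<and> (\<forall>P. preferred_ext AR Att P \<longrightarrow> S \<subseteq> P) \<and>
     (\<forall>T. admissible AR Att T \<and> (\<forall>P. preferred_ext AR Att P \<longrightarrow> T \<subseteq> P) \<and> S \<subseteq> T \<longrightarrow> T = S)"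

definition semi_stable_ext :: "'a set \<Rightarrow> ('a \<times> 'a) set \<Rightarrow> 'a set \<Rightarrow> bool" where
  "semi_stable_ext AR Att S \<longleftrightarrow> complete_ext AR Att S \<and>
     (\<forall>T. complete_ext AR Att T \<longrightarrow> \<not> (S \<union> plus Att S \<subset> T \<union> plus Att T))"

definition eager_ext :: "'a set \<Rightarrow> ('a \<times> 'a) set \<Rightarrow> 'a set \<Rightarrow> bool" where
  "eager_ext AR Att S \<longleftrightarrow>
     admissible AR Att S \<and> (\<forall>P. semi_stable_ext AR Att P \<longrightarrow> S \<subseteq> P) \<and>
     (\<forall>T. admissible AR Att T \<and> (\<forall>P. semi_stable_ext AR Att P \<longrightarrow> T \<subseteq> P) \<and> S \<subseteq> T \<longrightarrow> T = S)"

definition naive_ext :: "'a set \<Rightarrow> ('a \<times> 'a) set \<Rightarrow> 'a set \<Rightarrow> bool" where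
  "naive_ext AR Att S \<longleftrightarrow> S \<subseteq> AR \<and> conflict_free Att S \<and>
     (\<forall>T. T \<subseteq> AR \<and> conflict_free Att T \<and> S \<subseteq> T \<longrightarrow> T = S)"

definition stage_ext :: "'a set \<Rightarrow> ('a \<times> 'a) set \<Rightarrow> 'a set \<Rightarrow> bool" where
  "stage_ext AR Att S \<longleftrightarrow> S \<subseteq> AR \<and> conflict_free Att S \<and>
     \<not> (\<exists>T. T \<subseteq> AR \<and> conflict_free Att T \<and> S \<union> plus Att S \<subset> T \<union> plus Att T)"

definition mutually_reachable :: "('a \<times> 'a) set \<Rightarrow> 'a \<Rightarrow> 'a \<Rightarrow> bool" where
  "mutually_reachable Att a b \<longleftrightarrow> reachable Att a b \<and> reachable Att b a"

definition SCCS :: "'a set \<Rightarrow> ('a \<times> 'a) set \<Rightarrow> 'a set set" where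
  "SCCS AR Att = {S. S \<subseteq> AR \<and> S \<noteq> {} \<and> (\<forall>a \<in> S. \<forall>b \<in> S. mutually_reachable Att a b) \<and>
     (\<forall>T. T \<subseteq> AR \<and> S \<subseteq> T \<and> (\<forall>a \<in> T. \<forall>b \<in> T. mutually_reachable Att a b) \<longrightarrow> T = S)}"

definition restr :: "('a \<times> 'a) set \<Rightarrow> 'a set \<Rightarrow> ('a \<times> 'a) set" where
  "restr Att S = Att \<inter> (S \<times> S)"

definition S_out_minus :: "'a set \<Rightarrow> ('a \<times> 'a) set \<Rightarrow> 'a set \<Rightarrow> 'a set" where
  "S_out_minus AR Att S = {a \<in> AR. a \<notin> S \<and> (\<exists>b \<in> S. (a, b) \<in> Att)}"

definition D_set :: "'a set \<Rightarrow> ('a \<times> 'a) set \<Rightarrow> 'a set \<Rightarrow> 'a set \<Rightarrow> 'a set" where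
  "D_set AR Att S E = {a \<in> S. \<exists>e \<in> E \<inter> S_out_minus AR Att S. (e, a) \<in> Att}"

definition UP_set :: "'a set \<Rightarrow> ('a \<times> 'a) set \<Rightarrow> 'a set \<Rightarrow> 'a set \<Rightarrow> 'a set" where
  "UP_set AR Att S E = S - D_set AR Att S E"

text \<open>Recursion is made well-founded by a fuel argument:
when there is more than one SCC, each SCC is a proper subset of AR, so the
recursion depth is bounded by card AR and fuel Suc (card AR) never runs out
(the 0-fuel clause is never reached for finite AR).\<close>
fun scc_rec :: "('a set \<Rightarrow> ('a \<times> 'a) set \<Rightarrow> 'a set \<Rightarrow> bool) \<Rightarrow> nat \<Rightarrow>
    'a set \<Rightarrow> ('a \<times> 'a) set \<Rightarrow> 'a set \<Rightarrow> bool" where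
  "scc_rec base 0 AR Att E = False"
| "scc_rec base (Suc n) AR Att E =
     (E \<subseteq> AR \<and>
      (if card (SCCS AR Att) = 1 then base AR Att E
       else (\<forall>S \<in> SCCS AR Att.
               scc_rec base n (UP_set AR Att S E) (restr Att (UP_set AR Att S E)) (E \<inter> S))))"

definition cf2_ext :: "'a set \<Rightarrow> ('a \<times> 'a) set \<Rightarrow> 'a set \<Rightarrow> bool" where
  "cf2_ext AR Att E \<longleftrightarrow> scc_rec naive_ext (Suc (card AR)) AR Att E"

definition stage2_ext :: "'a set \<Rightarrow> ('a \<times> 'a) set \<Rightarrow> 'a set \<Rightarrow> bool" where
  "stage2_ext AR Att E \<longleftrightarrow> scc_rec stage_ext (Suc (card AR)) AR Att E"

datatype semantics = Complete | Preferred | SemiStable | Stage | Stage2 | CF2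
  | Grounded | Ideal | Eager

fun ext_pred :: "semantics \<Rightarrow> 'a set \<Rightarrow> ('a \<times> 'a) set \<Rightarrow> 'a set \<Rightarrow> bool" where
  "ext_pred Complete = complete_ext"
| "ext_pred Preferred = preferred_ext"
| "ext_pred SemiStable = semi_stable_ext"
| "ext_pred Stage = stage_ext"
| "ext_pred Stage2 = stage2_ext"
| "ext_pred CF2 = cf2_ext"
| "ext_pred Grounded = grounded_ext"
| "ext_pred Ideal = ideal_ext"
| "ext_pred Eager = eager_ext"

definition sigma :: "semantics \<Rightarrow> 'a set \<Rightarrow> ('a \<times> 'a) set \<Rightarrow> 'a set set" where
  "sigma x AR Att = {E. ext_pred x AR Att E}"

end

theory Submission
  imports Defs "HOL-Library.Transitive_Closure_Table"
begin

section \<open>Paths\<close>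

lemma seq_rtrancl:
  "xs \<noteq> [] \<Longrightarrow> (\<forall>i. Suc i < length xs \<longrightarrow> (xs ! i, xs ! Suc i) \<in> Att) \<Longrightarrow> (hd xs, last xs) \<in> Att\<^sup>*"
proof (induction xs)
  case Nil
  then show ?case by simp
next
  case (Cons x xs)
  show ?case
  proof (cases xs)
    case Nil
    then show ?thesis by simp
  next
    case (Cons y ys)
    have e: "(x, y) \<in> Att" using Cons.prems(2)[rule_format, of 0] Cons by simp
    have "\<forall>i. Suc i < length xs \<longrightarrow> (xs ! i, xs ! Suc i) \<in> Att"
      using Cons.prems(2) by (auto simp: Cons dest: spec[of _ "Suc _"])
    then have "(hd xs, last xs) \<in> Att\<^sup>*" using Cons.IH Cons by simp
    then show ?thesis using e Cons by simp
  qed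
qed

lemma path_props:
  "rtrancl_path r x ys y \<Longrightarrow>
   (\<forall>i. Suc i < length (x # ys) \<longrightarrow> r ((x # ys) ! i) ((x # ys) ! Suc i)) \<and> last (x # ys) = y"
proof (induction rule: rtrancl_path.induct)
  case (base x)
  then show ?case by simp
next
  case (step x y ys z)
  have "\<forall>i. Suc i < length (x # y # ys) \<longrightarrow> r ((x # y # ys) ! i) ((x # y # ys) ! Suc i)"
  proof (intro allI impI)
    fix i assume "Suc i < length (x # y # ys)"
    then show "r ((x # y # ys) ! i) ((x # y # ys) ! Suc i)"
      using step by (cases i) auto
  qed
  then show ?case using step by simp
qed

lemma reach_iff: "reachable Att a b \<longleftrightarrow> (a, b) \<in> Att\<^sup>*"
proof
  assume "reachable Att a b"
  then obtain xs where "attack_seq Att xs" "hd xs = a" "last xs = b"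
    unfolding reachable_def by blast
  then show "(a, b) \<in> Att\<^sup>*" using seq_rtrancl[of xs Att] unfolding attack_seq_def by auto
next
  assume "(a, b) \<in> Att\<^sup>*"
  then have "(\<lambda>x y. (x, y) \<in> Att)\<^sup>*\<^sup>* a b" by (simp add: rtrancl_def)
  then obtain ys where "rtrancl_path (\<lambda>x y. (x, y) \<in> Att) a ys b"
    by (auto simp: rtranclp_eq_rtrancl_path)
  then obtain ys' where p: "rtrancl_path (\<lambda>x y. (x, y) \<in> Att) a ys' b" "distinct (a # ys')"
    by (rule rtrancl_path_distinct)
  then have "attack_seq Att (a # ys')" using path_props[OF p(1)] unfolding attack_seq_def by auto
  moreover have "last (a # ys') = b" using path_props[OF p(1)] by simp
  ultimately show "reachable Att a b" unfolding reachable_def by force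
qed

lemma mr_iff: "mutually_reachable Att a b \<longleftrightarrow> (a, b) \<in> Att\<^sup>* \<and> (b, a) \<in> Att\<^sup>*"
  by (simp add: mutually_reachable_def reach_iff)

lemma last_notin_butlast: "distinct zs \<Longrightarrow> zs \<noteq> [] \<Longrightarrow> last zs \<notin> set (butlast zs)"
  by (metis append_butlast_last_id distinct_append disjoint_iff list.set_intros(1))

lemma cycle_exists:
  assumes "(a, a) \<in> Att\<^sup>+"
  shows "\<exists>xs. attack_cycle Att xs \<and> a \<in> set xs"
proof -
  obtain c where ac: "(a, c) \<in> Att" and ca: "(c, a) \<in> Att\<^sup>*"
    using assms by (meson tranclD)
  then have "(\<lambda>x y. (x, y) \<in> Att)\<^sup>*\<^sup>* c a" by (simp add: rtrancl_def)
  then obtain ys where "rtrancl_path (\<lambda>x y. (x, y) \<in> Att) c ys a"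
    by (auto simp: rtranclp_eq_rtrancl_path)
  then obtain ys' where p: "rtrancl_path (\<lambda>x y. (x, y) \<in> Att) c ys' a" "distinct (c # ys')"
    by (rule rtrancl_path_distinct)
  note pp = path_props[OF p(1)]
  define xs where "xs = a # c # ys'"
  have "a \<notin> set (butlast (c # ys'))"
    using last_notin_butlast[OF p(2)] pp by simp
  moreover have "distinct (butlast (c # ys'))" using p(2) distinct_butlast by blast
  ultimately have d: "distinct (butlast xs)" unfolding xs_def by simp
  have e: "\<forall>i. Suc i < length xs \<longrightarrow> (xs ! i, xs ! Suc i) \<in> Att"
  proof (intro allI impI)
    fix i assume "Suc i < length xs"
    then show "(xs ! i, xs ! Suc i) \<in> Att"
      using pp ac unfolding xs_def by (cases i) auto
  qed
  have "attack_cycle Att xs" unfolding attack_cycle_def using d e pp by (simp add: xs_def)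
  then show ?thesis unfolding xs_def by auto
qed

lemma cycle_in_AR:
  assumes "attack_cycle Att xs" "Att \<subseteq> AR \<times> AR" "y \<in> set xs"
  shows "y \<in> AR"
proof -
  obtain i where i: "i < length xs" "xs ! i = y" using assms(3) by (meson in_set_conv_nth)
  have l: "length xs \<ge> 2" "hd xs = last xs"
    and e: "\<forall>i. Suc i < length xs \<longrightarrow> (xs ! i, xs ! Suc i) \<in> Att"
    using assms(1) unfolding attack_cycle_def by auto
  show ?thesis
  proof (cases "Suc i < length xs")
    case True
    then show ?thesis using e i assms(2) by blast
  next
    case False
    then have "i = length xs - 1" using i by simp
    then have "y = last xs" using i l by (metis last_conv_nth list.size(3) not_numeral_le_zero)
    also have "\<dots> = xs ! 0" using l by (metis hd_conv_nth list.size(3) not_numeral_le_zero)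
    finally show ?thesis using e[rule_format, of 0] l assms(2) by auto
  qed
qed

section \<open>General facts on admissibility-based semantics\<close>

definition charf :: "'a set \<Rightarrow> ('a \<times> 'a) set \<Rightarrow> 'a set \<Rightarrow> 'a set" where
  "charf A At S = {a \<in> A. acceptable At a S}"

lemma acc_mono: "acceptable At a S \<Longrightarrow> S \<subseteq> T \<Longrightarrow> acceptable At a T"
  unfolding acceptable_def by (meson subsetD)

lemma charf_mono: "S \<subseteq> T \<Longrightarrow> charf A At S \<subseteq> charf A At T"
  proof
  fix x assume S: "S \<subseteq> T" and "x \<in> charf A At S"
  then have "x \<in> A" "acceptable At x S" unfolding charf_def by auto
  then show "x \<in> charf A At T" using acc_mono[OF _ S] unfolding charf_def by auto
qed

lemma adm_charf:
  assumes "admissible A At S"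
  shows "S \<subseteq> charf A At S" "admissible A At (charf A At S)"
proof -
  have SA: "S \<subseteq> A" and cfS: "conflict_free At S" and acS: "\<forall>a \<in> S. acceptable At a S"
    using assms unfolding admissible_def by auto
  show 1: "S \<subseteq> charf A At S"
  proof
    fix x assume "x \<in> S"
    then show "x \<in> charf A At S" using SA acS unfolding charf_def by auto
  qed
  have cf: "conflict_free At (charf A At S)"
    unfolding conflict_free_def
  proof (intro ballI)
    fix a b assume ab: "a \<in> charf A At S" "b \<in> charf A At S"
    show "(a, b) \<notin> At"
    proof
      assume "(a, b) \<in> At"
      moreover have "acceptable At b S" using ab(2) unfolding charf_def by simp
      ultimately obtain c where c: "c \<in> S" "(c, a) \<in> At" unfolding acceptable_def by blast
      have "acceptable At a S" using ab(1) unfolding charf_def by simp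
      then obtain d where d: "d \<in> S" "(d, c) \<in> At" using c(2) unfolding acceptable_def by blast
      show False using c(1) d cfS unfolding conflict_free_def by blast
    qed
  qed
  have ac: "\<forall>a \<in> charf A At S. acceptable At a (charf A At S)"
  proof
    fix a assume "a \<in> charf A At S"
    then have "acceptable At a S" unfolding charf_def by simp
    then show "acceptable At a (charf A At S)" using acc_mono[OF _ 1] by simp
  qed
  have "charf A At S \<subseteq> A" unfolding charf_def by auto
  then show "admissible A At (charf A At S)"
    unfolding admissible_def using cf ac by simp
qed

lemma complete_iff: "complete_ext A At S \<longleftrightarrow> admissible A At S \<and> charf A At S \<subseteq> S"
  unfolding complete_ext_def charf_def by (auto simp: subset_iff)

lemma complete_adm: "complete_ext A At S \<Longrightarrow> admissible A At S"
  unfolding complete_ext_def by auto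

lemma adm_empty: "admissible A At {}"
  unfolding admissible_def conflict_free_def by auto

lemma finite_adm: "finite A \<Longrightarrow> finite {S. P S \<and> admissible A At S}"
  by (rule finite_subset[of _ "Pow A"]) (auto simp: admissible_def)

lemma adm_ext_pref:
  assumes "finite A" "admissible A At T"
  shows "\<exists>P. preferred_ext A At P \<and> T \<subseteq> P"
proof -
  have "finite {S. True \<and> admissible A At S}" using finite_adm[OF assms(1)] .
  then obtain m where "m \<in> {S. True \<and> admissible A At S}" "T \<subseteq> m"
     "\<forall>b\<in>{S. True \<and> admissible A At S}. m \<subseteq> b \<longrightarrow> m = b"
    using finite_has_maximal2[of "{S. True \<and> admissible A At S}" T] assms(2) by auto
  then show ?thesis unfolding preferred_ext_def by auto
qed

lemma pref_complete: "preferred_ext A At P \<Longrightarrow> complete_ext A At P"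
proof -
  assume p: "preferred_ext A At P"
  then have a: "admissible A At P" and mx: "\<And>T. admissible A At T \<Longrightarrow> P \<subseteq> T \<Longrightarrow> T = P"
    unfolding preferred_ext_def by auto
  have "charf A At P = P" using mx[OF adm_charf(2)[OF a] adm_charf(1)[OF a]] .
  then show ?thesis using a complete_iff by (metis order_refl)
qed

lemma pref_iff:
  assumes "finite A"
  shows "preferred_ext A At S \<longleftrightarrow> complete_ext A At S \<and> (\<forall>T. complete_ext A At T \<and> S \<subseteq> T \<longrightarrow> T = S)"
proof
  assume p: "preferred_ext A At S"
  show "complete_ext A At S \<and> (\<forall>T. complete_ext A At T \<and> S \<subseteq> T \<longrightarrow> T = S)"
  proof (intro conjI allI impI)
    show "complete_ext A At S" using pref_complete[OF p] .
    fix T assume "complete_ext A At T \<and> S \<subseteq> T"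
    then have "admissible A At T" "S \<subseteq> T" using complete_adm by auto
    then show "T = S" using p unfolding preferred_ext_def by auto
  qed
next
  assume a: "complete_ext A At S \<and> (\<forall>T. complete_ext A At T \<and> S \<subseteq> T \<longrightarrow> T = S)"
  show "preferred_ext A At S"
    unfolding preferred_ext_def
  proof (intro conjI allI impI)
    show "admissible A At S" using a complete_adm by blast
    fix T assume T: "admissible A At T \<and> S \<subseteq> T"
    then obtain P where P: "preferred_ext A At P" "T \<subseteq> P" using adm_ext_pref[OF assms] by blast
    have "complete_ext A At P" using pref_complete[OF P(1)] .
    moreover have "S \<subseteq> P" using T P by auto
    ultimately have "P = S" using a by auto
    then show "T = S" using P T by auto
  qed
qed

lemma complete_exists: "finite A \<Longrightarrow> \<exists>S. complete_ext A At S"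
  using adm_ext_pref[OF _ adm_empty] pref_complete by blast

lemma finite_complete: "finite A \<Longrightarrow> finite {S. complete_ext A At S}"
  by (rule finite_subset[of _ "Pow A"]) (auto simp: complete_ext_def admissible_def)

lemma grounded_exists: "finite A \<Longrightarrow> \<exists>S. grounded_ext A At S"
proof -
  assume f: "finite A"
  obtain S0 where "complete_ext A At S0" using complete_exists[OF f] by blast
  then obtain m where "m \<in> {S. complete_ext A At S}" "\<forall>b\<in>{S. complete_ext A At S}. b \<subseteq> m \<longrightarrow> m = b"
    using finite_has_minimal[OF finite_complete[OF f], of At] by blast
  then show ?thesis unfolding grounded_ext_def by auto
qed

lemma plus_sub: "At \<subseteq> A \<times> A \<Longrightarrow> plus At S \<subseteq> A"
  unfolding plus_def by auto

lemma semi_stable_exists: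
  assumes f: "finite A" and w: "At \<subseteq> A \<times> A"
  shows "\<exists>S. semi_stable_ext A At S"
proof -
  let ?C = "{S. complete_ext A At S}"
  let ?f = "\<lambda>S. card (S \<union> plus At S)"
  have "?C \<noteq> {}" using complete_exists[OF f] by blast
  then have "?f ` ?C \<noteq> {}" "finite (?f ` ?C)" using finite_complete[OF f] by auto
  then obtain S where S: "S \<in> ?C" "?f S = Max (?f ` ?C)" by (metis (no_types, lifting) Max_in imageE)
  have "\<forall>T. complete_ext A At T \<longrightarrow> \<not> (S \<union> plus At S \<subset> T \<union> plus At T)"
  proof (intro allI impI notI)
    fix T assume T: "complete_ext A At T" "S \<union> plus At S \<subset> T \<union> plus At T"
    have "finite (T \<union> plus At T)" using T(1) plus_sub[OF w] f
      unfolding complete_ext_def admissible_def by (meson finite_UnI finite_subset)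
    then have "?f S < ?f T" using T(2) by (simp add: psubset_card_mono)
    moreover have "?f T \<le> Max (?f ` ?C)" using T(1) \<open>finite (?f ` ?C)\<close> by auto
    ultimately show False using S by simp
  qed
  then show ?thesis using S unfolding semi_stable_ext_def by auto
qed

lemma semi_stable_complete: "semi_stable_ext A At S \<Longrightarrow> complete_ext A At S"
  unfolding semi_stable_ext_def by auto

definition idealQ :: "'a set \<Rightarrow> ('a \<times> 'a) set \<Rightarrow> ('a set \<Rightarrow> bool) \<Rightarrow> 'a set \<Rightarrow> bool" where
  "idealQ A At Q S \<longleftrightarrow> admissible A At S \<and> (\<forall>P. Q P \<longrightarrow> S \<subseteq> P) \<and>
     (\<forall>T. admissible A At T \<and> (\<forall>P. Q P \<longrightarrow> T \<subseteq> P) \<and> S \<subseteq> T \<longrightarrow> T = S)"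

lemma idealQ_complete:
  assumes Q: "\<And>P. Q P \<Longrightarrow> complete_ext A At P" and S: "idealQ A At Q S"
  shows "complete_ext A At S"
proof -
  have a: "admissible A At S" and sub: "\<And>P. Q P \<Longrightarrow> S \<subseteq> P"
    and mx: "\<And>T. admissible A At T \<Longrightarrow> (\<forall>P. Q P \<longrightarrow> T \<subseteq> P) \<Longrightarrow> S \<subseteq> T \<Longrightarrow> T = S"
    using S unfolding idealQ_def by auto
  have "\<forall>P. Q P \<longrightarrow> charf A At S \<subseteq> P"
  proof (intro allI impI)
    fix P assume "Q P"
    then have "charf A At S \<subseteq> charf A At P" using sub charf_mono by metis
    also have "\<dots> \<subseteq> P" using Q[OF \<open>Q P\<close>] complete_iff by metis
    finally show "charf A At S \<subseteq> P" .
  qed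
  then have "charf A At S = S" using mx[OF adm_charf(2)[OF a] _ adm_charf(1)[OF a]] by simp
  then show ?thesis using a complete_iff by (metis order_refl)
qed

lemma idealQ_exists_above:
  assumes f: "finite A" and T: "admissible A At T" "\<forall>P. Q P \<longrightarrow> T \<subseteq> P"
  shows "\<exists>S. idealQ A At Q S \<and> T \<subseteq> S"
proof -
  define X where "X = {S. (\<forall>P. Q P \<longrightarrow> S \<subseteq> P) \<and> admissible A At S}"
  have fX: "finite X" unfolding X_def by (rule finite_adm[OF f])
  have "T \<in> X" using T unfolding X_def by simp
  from finite_has_maximal2[OF fX this]
  obtain m where m: "m \<in> X" "T \<subseteq> m" "\<forall>b\<in>X. m \<subseteq> b \<longrightarrow> m = b" by blast
  have "idealQ A At Q m" unfolding idealQ_def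
  proof (intro conjI allI impI)
    show "admissible A At m" using m(1) unfolding X_def by simp
    show "\<And>P. Q P \<Longrightarrow> m \<subseteq> P" using m(1) unfolding X_def by simp
    fix T' assume "admissible A At T' \<and> (\<forall>P. Q P \<longrightarrow> T' \<subseteq> P) \<and> m \<subseteq> T'"
    then have "T' \<in> X" "m \<subseteq> T'" unfolding X_def by auto
    then show "T' = m" using m(3) by auto
  qed
  then show ?thesis using m(2) by blast
qed

lemma idealQ_iff:
  assumes f: "finite A" and Q: "\<And>P. Q P \<Longrightarrow> complete_ext A At P"
  shows "idealQ A At Q S \<longleftrightarrow> complete_ext A At S \<and> (\<forall>P. Q P \<longrightarrow> S \<subseteq> P) \<and>
     (\<forall>T. complete_ext A At T \<and> (\<forall>P. Q P \<longrightarrow> T \<subseteq> P) \<and> S \<subseteq> T \<longrightarrow> T = S)"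
proof
  assume S: "idealQ A At Q S"
  have sub: "\<And>P. Q P \<Longrightarrow> S \<subseteq> P"
    and mx: "\<And>T. admissible A At T \<Longrightarrow> (\<forall>P. Q P \<longrightarrow> T \<subseteq> P) \<Longrightarrow> S \<subseteq> T \<Longrightarrow> T = S"
    using S unfolding idealQ_def by auto
  show "complete_ext A At S \<and> (\<forall>P. Q P \<longrightarrow> S \<subseteq> P) \<and>
     (\<forall>T. complete_ext A At T \<and> (\<forall>P. Q P \<longrightarrow> T \<subseteq> P) \<and> S \<subseteq> T \<longrightarrow> T = S)"
  proof (intro conjI allI impI)
    show "complete_ext A At S" using idealQ_complete[OF Q S] .
    show "\<And>P. Q P \<Longrightarrow> S \<subseteq> P" using sub .
    fix T assume T: "complete_ext A At T \<and> (\<forall>P. Q P \<longrightarrow> T \<subseteq> P) \<and> S \<subseteq> T"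
    then have "complete_ext A At T" "\<forall>P. Q P \<longrightarrow> T \<subseteq> P" "S \<subseteq> T" by auto
    then show "T = S" using mx[OF complete_adm] by blast
  qed
next
  assume S: "complete_ext A At S \<and> (\<forall>P. Q P \<longrightarrow> S \<subseteq> P) \<and>
     (\<forall>T. complete_ext A At T \<and> (\<forall>P. Q P \<longrightarrow> T \<subseteq> P) \<and> S \<subseteq> T \<longrightarrow> T = S)"
  have cS: "complete_ext A At S" and subS: "\<And>P. Q P \<Longrightarrow> S \<subseteq> P"
    and mxS: "\<And>T. complete_ext A At T \<Longrightarrow> (\<forall>P. Q P \<longrightarrow> T \<subseteq> P) \<Longrightarrow> S \<subseteq> T \<Longrightarrow> T = S"
    using S by auto
  show "idealQ A At Q S"
    unfolding idealQ_def
  proof (intro conjI allI impI)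
    show "admissible A At S" using cS complete_adm by blast
    show "\<And>P. Q P \<Longrightarrow> S \<subseteq> P" using subS by blast
    fix T assume T: "admissible A At T \<and> (\<forall>P. Q P \<longrightarrow> T \<subseteq> P) \<and> S \<subseteq> T"
    then obtain M where M: "idealQ A At Q M" "T \<subseteq> M" using idealQ_exists_above[OF f] by blast
    have c: "complete_ext A At M" using idealQ_complete[OF Q M(1)] .
    have "\<forall>P. Q P \<longrightarrow> M \<subseteq> P" using M(1) unfolding idealQ_def by auto
    moreover have "S \<subseteq> M" using T M by auto
    ultimately have "M = S" using mxS[OF c] by blast
    then show "T = S" using M T by auto
  qed
qed

lemma ideal_is_idealQ: "ideal_ext A At S \<longleftrightarrow> idealQ A At (preferred_ext A At) S"
  unfolding ideal_ext_def idealQ_def by simp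

lemma eager_is_idealQ: "eager_ext A At S \<longleftrightarrow> idealQ A At (semi_stable_ext A At) S"
  unfolding eager_ext_def idealQ_def by simp




section \<open>Well-founded attacker-closed parts\<close>

definition closedV :: "('a \<times> 'a) set \<Rightarrow> 'a set \<Rightarrow> bool" where
  "closedV At V \<longleftrightarrow> (\<forall>x\<in>V. \<forall>y. (y, x) \<in> At \<longrightarrow> y \<in> V)"

definition relV :: "('a \<times> 'a) set \<Rightarrow> 'a set \<Rightarrow> ('a \<times> 'a) set" where
  "relV At V = {(y, x). (y, x) \<in> At \<and> x \<in> V}"

definition GL :: "('a \<times> 'a) set \<Rightarrow> 'a set \<Rightarrow> 'a set \<Rightarrow> bool" where
  "GL At V P \<longleftrightarrow> (\<forall>x\<in>V. x \<in> P \<longleftrightarrow> \<not> (\<exists>y\<in>P. (y, x) \<in> At))"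

lemma wf_relV:
  assumes "finite At" "\<forall>x\<in>V. (x, x) \<notin> At\<^sup>+"
  shows "wf (relV At V)"
proof (rule finite_acyclic_wf)
  show "finite (relV At V)"
    by (rule finite_subset[OF _ assms(1)]) (auto simp: relV_def)
  show "acyclic (relV At V)"
    unfolding acyclic_def
  proof (intro allI notI)
    fix x assume x: "(x, x) \<in> (relV At V)\<^sup>+"
    have "relV At V \<subseteq> At" by (auto simp: relV_def)
    then have "(x, x) \<in> At\<^sup>+" using x trancl_mono by blast
    moreover obtain c where "(c, x) \<in> relV At V" using x by (meson tranclD2)
    then have "x \<in> V" by (simp add: relV_def)
    ultimately show False using assms(2) by blast
  qed
qed

lemma GL_unique:
  assumes wf: "wf (relV At V)" and cl: "closedV At V"
    and P: "GL At V P" and Q: "GL At V Q"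
  shows "x \<in> V \<Longrightarrow> (x \<in> P \<longleftrightarrow> x \<in> Q)"
proof (induction x rule: wf_induct_rule[OF wf])
  case (1 x)
  have "\<And>y. (y, x) \<in> At \<Longrightarrow> (y \<in> P \<longleftrightarrow> y \<in> Q)"
  proof -
    fix y assume yx: "(y, x) \<in> At"
    then have "y \<in> V" using cl 1(2) unfolding closedV_def by blast
    moreover have "(y, x) \<in> relV At V" using yx 1(2) by (simp add: relV_def)
    ultimately show "y \<in> P \<longleftrightarrow> y \<in> Q" using 1(1) by blast
  qed
  then show ?case using P Q 1(2) unfolding GL_def by blast
qed

lemma complete_attacks:
  assumes wf: "wf (relV At V)" and cl: "closedV At V" and VA: "V \<subseteq> A"
    and S: "complete_ext A At S"
  shows "x \<in> V \<Longrightarrow> x \<notin> S \<Longrightarrow> \<exists>s\<in>S. (s, x) \<in> At"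
proof (induction x rule: wf_induct_rule[OF wf])
  case (1 x)
  have "x \<in> A" using 1 VA by blast
  then have "\<not> acceptable At x S" using S 1(3) unfolding complete_ext_def by blast
  then obtain y where y: "(y, x) \<in> At" "\<not> (\<exists>c\<in>S. (c, y) \<in> At)"
    unfolding acceptable_def by blast
  have "y \<in> V" using cl y(1) 1(2) unfolding closedV_def by blast
  moreover have "(y, x) \<in> relV At V" using y(1) 1(2) by (simp add: relV_def)
  ultimately have "y \<in> S" using 1(1) y(2) by blast
  then show ?case using y(1) by blast
qed

lemma complete_GL:
  assumes wf: "wf (relV At V)" and cl: "closedV At V" and VA: "V \<subseteq> A"
    and S: "complete_ext A At S"
  shows "GL At V S"
  unfolding GL_def
proof
  fix x assume x: "x \<in> V"
  have cf: "conflict_free At S" using S unfolding complete_ext_def admissible_def by blast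
  show "x \<in> S \<longleftrightarrow> \<not> (\<exists>y\<in>S. (y, x) \<in> At)"
  proof
    assume "x \<in> S" then show "\<not> (\<exists>y\<in>S. (y, x) \<in> At)" using cf unfolding conflict_free_def by blast
  next
    assume "\<not> (\<exists>y\<in>S. (y, x) \<in> At)"
    then show "x \<in> S" using complete_attacks[OF wf cl VA S x] by blast
  qed
qed

lemma range_unique:
  assumes wf: "wf (relV At V)" and cl: "closedV At V"
    and S: "conflict_free At S" and T: "conflict_free At T"
    and r: "\<forall>x\<in>V. x \<in> S \<union> plus At S \<longleftrightarrow> x \<in> T \<union> plus At T"
  shows "x \<in> V \<Longrightarrow> (x \<in> S \<longleftrightarrow> x \<in> T)"
proof (induction x rule: wf_induct_rule[OF wf])
  case (1 x)
  have IH: "\<And>y. (y, x) \<in> At \<Longrightarrow> (y \<in> S \<longleftrightarrow> y \<in> T)"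
  proof -
    fix y assume yx: "(y, x) \<in> At"
    then have "y \<in> V" using cl 1(2) unfolding closedV_def by blast
    moreover have "(y, x) \<in> relV At V" using yx 1(2) by (simp add: relV_def)
    ultimately show "y \<in> S \<longleftrightarrow> y \<in> T" using 1(1) by blast
  qed
  show ?case
  proof
    assume xS: "x \<in> S"
    show "x \<in> T"
    proof (rule ccontr)
      assume "x \<notin> T"
      then have "x \<in> plus At T" using r 1(2) xS by blast
      then obtain t where "t \<in> T" "(t, x) \<in> At" unfolding plus_def by blast
      then have "t \<in> S" using IH by blast
      then show False using xS \<open>(t, x) \<in> At\<close> S unfolding conflict_free_def by blast
    qed
  next
    assume xT: "x \<in> T"
    show "x \<in> S"
    proof (rule ccontr)
      assume "x \<notin> S"
      then have "x \<in> plus At S" using r 1(2) xT by blast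
      then obtain t where "t \<in> S" "(t, x) \<in> At" unfolding plus_def by blast
      then have "t \<in> T" using IH by blast
      then show False using xT \<open>(t, x) \<in> At\<close> T unfolding conflict_free_def by blast
    qed
  qed
qed


section \<open>SCCs\<close>

definition cls :: "'a set \<Rightarrow> ('a \<times> 'a) set \<Rightarrow> 'a \<Rightarrow> 'a set" where
  "cls A At a = {b \<in> A. (a, b) \<in> At\<^sup>* \<and> (b, a) \<in> At\<^sup>*}"

lemma SCCS_iff: "S \<in> SCCS A At \<longleftrightarrow> S \<subseteq> A \<and> S \<noteq> {} \<and>
   (\<forall>a\<in>S. \<forall>b\<in>S. (a, b) \<in> At\<^sup>* \<and> (b, a) \<in> At\<^sup>*) \<and>
   (\<forall>T. T \<subseteq> A \<and> S \<subseteq> T \<and> (\<forall>a\<in>T. \<forall>b\<in>T. (a, b) \<in> At\<^sup>* \<and> (b, a) \<in> At\<^sup>*) \<longrightarrow> T = S)"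
  unfolding SCCS_def mr_iff by simp

lemma cls_SCCS: "a \<in> A \<Longrightarrow> cls A At a \<in> SCCS A At"
proof -
  assume a: "a \<in> A"
  have 1: "cls A At a \<subseteq> A" unfolding cls_def by auto
  have 2: "cls A At a \<noteq> {}" using a unfolding cls_def by auto
  have 3: "\<forall>x\<in>cls A At a. \<forall>y\<in>cls A At a. (x, y) \<in> At\<^sup>* \<and> (y, x) \<in> At\<^sup>*"
  proof (intro ballI)
    fix x y assume "x \<in> cls A At a" "y \<in> cls A At a"
    then have "(a, x) \<in> At\<^sup>*" "(x, a) \<in> At\<^sup>*" "(a, y) \<in> At\<^sup>*" "(y, a) \<in> At\<^sup>*"
      unfolding cls_def by auto
    then show "(x, y) \<in> At\<^sup>* \<and> (y, x) \<in> At\<^sup>*" by (meson rtrancl_trans)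
  qed
  have 4: "\<forall>T. T \<subseteq> A \<and> cls A At a \<subseteq> T \<and> (\<forall>x\<in>T. \<forall>y\<in>T. (x, y) \<in> At\<^sup>* \<and> (y, x) \<in> At\<^sup>*) \<longrightarrow> T = cls A At a"
  proof (intro allI impI)
    fix T assume T: "T \<subseteq> A \<and> cls A At a \<subseteq> T \<and> (\<forall>x\<in>T. \<forall>y\<in>T. (x, y) \<in> At\<^sup>* \<and> (y, x) \<in> At\<^sup>*)"
    have "a \<in> cls A At a" using a unfolding cls_def by auto
    then have aT: "a \<in> T" using T by blast
    have "T \<subseteq> cls A At a"
    proof
      fix x assume "x \<in> T"
      then have "(a, x) \<in> At\<^sup>* \<and> (x, a) \<in> At\<^sup>*" "x \<in> A" using T aT by blast+
      then show "x \<in> cls A At a" unfolding cls_def by simp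
    qed
    then show "T = cls A At a" using T by blast
  qed
  show ?thesis unfolding SCCS_iff using 1 2 3 4 by blast
qed

lemma SCCS_cls: "S \<in> SCCS A At \<Longrightarrow> a \<in> S \<Longrightarrow> S = cls A At a"
proof -
  assume S: "S \<in> SCCS A At" and a: "a \<in> S"
  have sub: "S \<subseteq> cls A At a" using S a unfolding SCCS_iff cls_def by auto
  have "a \<in> A" using S a unfolding SCCS_iff by auto
  then have "cls A At a \<in> SCCS A At" by (rule cls_SCCS)
  then have "\<forall>x\<in>cls A At a. \<forall>y\<in>cls A At a. (x, y) \<in> At\<^sup>* \<and> (y, x) \<in> At\<^sup>*" "cls A At a \<subseteq> A"
    unfolding SCCS_iff by auto
  then show ?thesis using S sub unfolding SCCS_iff by blast
qed

lemma SCCS_disj: "S1 \<in> SCCS A At \<Longrightarrow> S2 \<in> SCCS A At \<Longrightarrow> x \<in> S1 \<Longrightarrow> x \<in> S2 \<Longrightarrow> S1 = S2"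
  using SCCS_cls by metis

lemma SCCS_sub: "S \<in> SCCS A At \<Longrightarrow> S \<subseteq> A"
  unfolding SCCS_iff by auto

lemma SCCS_ne: "S \<in> SCCS A At \<Longrightarrow> S \<noteq> {}"
  unfolding SCCS_iff by auto

lemma finite_SCCS: "finite A \<Longrightarrow> finite (SCCS A At)"
  by (rule finite_subset[of _ "Pow A"]) (auto dest: SCCS_sub)

lemma SCCS_card1:
  assumes "finite A" "card (SCCS A At) = 1"
  shows "SCCS A At = {A}"
proof -
  obtain S0 where S0: "SCCS A At = {S0}" using assms(2) card_1_singletonE by blast
  have "S0 \<subseteq> A" using S0 SCCS_sub by blast
  moreover have "A \<subseteq> S0"
  proof
    fix a assume "a \<in> A"
    then have "cls A At a \<in> SCCS A At" by (rule cls_SCCS)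
    then have "cls A At a = S0" using S0 by blast
    moreover have "a \<in> cls A At a" using \<open>a \<in> A\<close> unfolding cls_def by simp
    ultimately show "a \<in> S0" by simp
  qed
  ultimately show ?thesis using S0 by auto
qed

lemma SCCS_proper:
  assumes "finite A" "card (SCCS A At) \<noteq> 1" "S \<in> SCCS A At"
  shows "S \<subset> A"
proof -
  have f: "finite (SCCS A At)" using finite_SCCS[OF assms(1)] .
  have "SCCS A At \<noteq> {S}" using assms(2) by auto
  then obtain S2 where S2: "S2 \<in> SCCS A At" "S2 \<noteq> S" using assms(3) by blast
  then obtain y where "y \<in> S2" using SCCS_ne by blast
  then have "y \<notin> S" using SCCS_disj[OF S2(1) assms(3)] S2(2) by blast
  moreover have "y \<in> A" using \<open>y \<in> S2\<close> SCCS_sub[OF S2(1)] by blast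
  ultimately show ?thesis using SCCS_sub[OF assms(3)] by blast
qed

lemma UP_sub: "UP_set A At S E \<subseteq> S"
  unfolding UP_set_def by auto

lemma SCCS_empty: "SCCS {} At = {}"
  using SCCS_sub SCCS_ne by blast

lemma scc_rec_empty: "scc_rec base (Suc k) {} At {}"
  by (simp add: SCCS_empty)

lemma scc_rec_sub: "scc_rec base n A At E \<Longrightarrow> E \<subseteq> A"
  by (cases n) auto

lemma scc_fuel:
  "finite A \<Longrightarrow> card A < n \<Longrightarrow> card A < m \<Longrightarrow> scc_rec base n A At E = scc_rec base m A At E"
proof (induction n arbitrary: m A At E)
  case 0
  then show ?case by simp
next
  case (Suc n)
  obtain m' where m: "m = Suc m'" using Suc.prems(3) by (cases m) auto
  have eq: "\<And>S. S \<in> SCCS A At \<Longrightarrow> card (SCCS A At) \<noteq> 1 \<Longrightarrow>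
     scc_rec base n (UP_set A At S E) (restr At (UP_set A At S E)) (E \<inter> S) =
     scc_rec base m' (UP_set A At S E) (restr At (UP_set A At S E)) (E \<inter> S)"
  proof -
    fix S assume S: "S \<in> SCCS A At" and c: "card (SCCS A At) \<noteq> 1"
    have "S \<subset> A" using SCCS_proper[OF Suc.prems(1) c S] .
    then have ps: "UP_set A At S E \<subset> A" by (rule subset_psubset_trans[OF UP_sub])
    have cl: "card (UP_set A At S E) < card A" using psubset_card_mono[OF Suc.prems(1) ps] .
    have fi: "finite (UP_set A At S E)" using finite_subset[OF psubset_imp_subset[OF ps] Suc.prems(1)] .
    have "card (UP_set A At S E) < n" using cl Suc.prems(2) by linarith
    moreover have "card (UP_set A At S E) < m'" using cl Suc.prems(3) m by linarith
    ultimately show "scc_rec base n (UP_set A At S E) (restr At (UP_set A At S E)) (E \<inter> S) =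
     scc_rec base m' (UP_set A At S E) (restr At (UP_set A At S E)) (E \<inter> S)"
      by (rule Suc.IH[OF fi]; fact)
  qed
  have l: "scc_rec base (Suc n) A At E = (E \<subseteq> A \<and> (if card (SCCS A At) = 1 then base A At E
       else (\<forall>S \<in> SCCS A At. scc_rec base n (UP_set A At S E) (restr At (UP_set A At S E)) (E \<inter> S))))"
    by (rule scc_rec.simps(2))
  have r: "scc_rec base (Suc m') A At E = (E \<subseteq> A \<and> (if card (SCCS A At) = 1 then base A At E
       else (\<forall>S \<in> SCCS A At. scc_rec base m' (UP_set A At S E) (restr At (UP_set A At S E)) (E \<inter> S))))"
    by (rule scc_rec.simps(2))
  show ?case unfolding m l r using eq by (cases "card (SCCS A At) = 1") auto
qed

lemma UP_whole: "UP_set A At A E = A"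
  unfolding UP_set_def D_set_def S_out_minus_def by auto

lemma restr_whole: "At \<subseteq> A \<times> A \<Longrightarrow> restr At A = At"
  unfolding restr_def by auto

lemma scc_dec:
  assumes f: "finite A" and w: "At \<subseteq> A \<times> A" and n: "card A < n"
    and E: "scc_rec base n A At E" and S: "S \<in> SCCS A At"
  shows "scc_rec base (Suc (card (UP_set A At S E))) (UP_set A At S E)
           (restr At (UP_set A At S E)) (E \<inter> S)"
proof -
  obtain n' where n': "n = Suc n'" using n by (cases n) auto
  show ?thesis
  proof (cases "card (SCCS A At) = 1")
    case True
    then have SA: "S = A" using SCCS_card1[OF f True] S by blast
    have EA: "E \<inter> S = E" using scc_rec_sub[OF E] SA by blast
    have "scc_rec base (Suc (card A)) A At E"
      using E scc_fuel[of A n "Suc (card A)" base At E] f n by simp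
    then show ?thesis unfolding EA unfolding SA UP_whole restr_whole[OF w] .
  next
    case False
    then have r: "scc_rec base n' (UP_set A At S E) (restr At (UP_set A At S E)) (E \<inter> S)"
      using E S n' by simp
    have "S \<subset> A" using SCCS_proper[OF f False S] .
    then have ps: "UP_set A At S E \<subset> A" by (rule subset_psubset_trans[OF UP_sub])
    have cl: "card (UP_set A At S E) < card A" using psubset_card_mono[OF f ps] .
    have fi: "finite (UP_set A At S E)" using finite_subset[OF psubset_imp_subset[OF ps] f] .
    have "card (UP_set A At S E) < n'" using cl n n' by linarith
    then show ?thesis using r scc_fuel[OF fi, of n' "Suc (card (UP_set A At S E))"] by simp
  qed
qed

lemma scc_intro:
  assumes f: "finite A" and n: "card A < n" and E: "E \<subseteq> A" and c: "card (SCCS A At) \<noteq> 1"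
    and r: "\<forall>S\<in>SCCS A At. scc_rec base (Suc (card (UP_set A At S E))) (UP_set A At S E)
           (restr At (UP_set A At S E)) (E \<inter> S)"
  shows "scc_rec base n A At E"
proof -
  obtain n' where n': "n = Suc n'" using n by (cases n) auto
  have "\<forall>S\<in>SCCS A At. scc_rec base n' (UP_set A At S E) (restr At (UP_set A At S E)) (E \<inter> S)"
  proof
    fix S assume S: "S \<in> SCCS A At"
    have "S \<subset> A" using SCCS_proper[OF f c S] .
    then have ps: "UP_set A At S E \<subset> A" by (rule subset_psubset_trans[OF UP_sub])
    have cl: "card (UP_set A At S E) < card A" using psubset_card_mono[OF f ps] .
    have fi: "finite (UP_set A At S E)" using finite_subset[OF psubset_imp_subset[OF ps] f] .
    have "card (UP_set A At S E) < n'" using cl n n' by linarith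
    then show "scc_rec base n' (UP_set A At S E) (restr At (UP_set A At S E)) (E \<inter> S)"
      using r S scc_fuel[OF fi, of n' "Suc (card (UP_set A At S E))"] by simp
  qed
  then show ?thesis using n' E c by simp
qed




lemma rt_in: "At \<subseteq> A \<times> A \<Longrightarrow> (a, y) \<in> At\<^sup>* \<Longrightarrow> a \<in> A \<Longrightarrow> y \<in> A"
  by (erule rtranclE) auto

lemma SCCS_single: "SCCS {x} {} = {{x}}"
proof -
  have "cls {x} {} x \<in> SCCS {x} {}" by (rule cls_SCCS) simp
  moreover have "cls {x} {} x = {x}" unfolding cls_def by auto
  ultimately have 1: "{x} \<in> SCCS {x} {}" by simp
  have "\<And>S. S \<in> SCCS {x} {} \<Longrightarrow> S = {x}"
  proof -
    fix S assume "S \<in> SCCS {x} {}"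
    then have "S \<subseteq> {x}" "S \<noteq> {}" using SCCS_sub SCCS_ne by blast+
    then show "S = {x}" by auto
  qed
  then show ?thesis using 1 by blast
qed

lemma scc_GL:
  assumes f: "finite A" and w: "At \<subseteq> A \<times> A" and VA: "V \<subseteq> A"
    and ac: "\<forall>x\<in>V. (x, x) \<notin> At\<^sup>+"
    and B3: "\<And>x F. base {x} {} F \<Longrightarrow> F = {x}"
    and n: "card A < n" and E: "scc_rec base n A At E"
  shows "GL At V E"
  unfolding GL_def
proof
  fix x assume xV: "x \<in> V"
  have xA: "x \<in> A" using xV VA by blast
  have nl: "(x, x) \<notin> At" using ac xV by blast
  have "cls A At x = {x}"
  proof -
    have "y = x" if "y \<in> cls A At x" for y
    proof (rule ccontr)
      assume "y \<noteq> x"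
      have "(x, y) \<in> At\<^sup>*" "(y, x) \<in> At\<^sup>*" using that unfolding cls_def by auto
      then have "(x, y) \<in> At\<^sup>+" using \<open>y \<noteq> x\<close> by (metis rtrancl_eq_or_trancl)
      then have "(x, x) \<in> At\<^sup>+" using \<open>(y, x) \<in> At\<^sup>*\<close> by (rule trancl_rtrancl_trancl)
      then show False using ac xV by blast
    qed
    moreover have "x \<in> cls A At x" using xA unfolding cls_def by simp
    ultimately show ?thesis by blast
  qed
  then have xS: "{x} \<in> SCCS A At" using cls_SCCS[OF xA, of At] by simp
  note R = scc_dec[OF f w n E xS]
  have key: "(\<exists>e\<in>E \<inter> S_out_minus A At {x}. (e, x) \<in> At) \<longleftrightarrow> (\<exists>e\<in>E. (e, x) \<in> At)"
  proof
    assume "\<exists>e\<in>E. (e, x) \<in> At"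
    then obtain e where e: "e \<in> E" "(e, x) \<in> At" by blast
    then have "e \<in> A" "e \<noteq> x" using w nl by auto
    then have "e \<in> S_out_minus A At {x}" using e unfolding S_out_minus_def by auto
    then show "\<exists>e\<in>E \<inter> S_out_minus A At {x}. (e, x) \<in> At" using e by blast
  qed blast
  show "x \<in> E \<longleftrightarrow> \<not> (\<exists>y\<in>E. (y, x) \<in> At)"
  proof (cases "\<exists>e\<in>E. (e, x) \<in> At")
    case True
    then have "UP_set A At {x} E = {}" using key unfolding UP_set_def D_set_def by auto
    then have "E \<inter> {x} \<subseteq> {}" using scc_rec_sub[OF R] by simp
    then show ?thesis using True by blast
  next
    case False
    then have u: "UP_set A At {x} E = {x}" using key unfolding UP_set_def D_set_def by auto
    have rr: "restr At {x} = {}" using nl unfolding restr_def by auto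
    have "scc_rec base (Suc 1) {x} {} (E \<inter> {x})" using R unfolding u rr by simp
    then have "base {x} {} (E \<inter> {x})" using SCCS_single[of x] by simp
    then have "E \<inter> {x} = {x}" using B3 by blast
    then show ?thesis using False by blast
  qed
qed


lemma scc_exists:
  assumes B1: "\<And>A At. finite A \<Longrightarrow> At \<subseteq> A \<times> A \<Longrightarrow> \<exists>E. base A At E \<and> E \<subseteq> A"
  shows "finite A \<Longrightarrow> At \<subseteq> A \<times> A \<Longrightarrow> \<exists>E. scc_rec base (Suc (card A)) A At E"
proof (induction "card A" arbitrary: A At rule: less_induct)
  case less
  note f = less.prems(1) and w = less.prems(2)
  show ?case
  proof (cases "card (SCCS A At) = 1")
    case True
    obtain E where "base A At E" "E \<subseteq> A" using B1[OF f w] by blast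
    then show ?thesis using True by auto
  next
    case c: False
    show ?thesis
    proof (cases "A = {}")
      case True
      then show ?thesis using scc_rec_empty[of base 0 At] by auto
    next
      case ne: False
      define g where "g = (\<lambda>a. card {y. (a, y) \<in> At\<^sup>*})"
      have reach_sub: "\<And>a. a \<in> A \<Longrightarrow> {y. (a, y) \<in> At\<^sup>*} \<subseteq> A" using rt_in[OF w] by blast
      have fin_reach: "\<And>a. a \<in> A \<Longrightarrow> finite {y. (a, y) \<in> At\<^sup>*}"
        using reach_sub f finite_subset by blast
      define m where "m = Min (g ` A)"
      have "m \<in> g ` A" unfolding m_def using f ne by simp
      then obtain a where aA: "a \<in> A" and ga: "g a = m" by blast
      have amin: "\<And>b. b \<in> A \<Longrightarrow> g a \<le> g b" unfolding ga m_def using f by simp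
      define Sf where "Sf = cls A At a"
      have sink: "\<And>x y. x \<in> Sf \<Longrightarrow> (x, y) \<in> At\<^sup>* \<Longrightarrow> y \<in> Sf"
      proof -
        fix x y assume x: "x \<in> Sf" and xy: "(x, y) \<in> At\<^sup>*"
        have "(a, x) \<in> At\<^sup>*" using x unfolding Sf_def cls_def by simp
        then have ay: "(a, y) \<in> At\<^sup>*" using xy by simp
        then have yA: "y \<in> A" using rt_in[OF w] aA by blast
        show "y \<in> Sf"
        proof (rule ccontr)
          assume "y \<notin> Sf"
          then have nya: "(y, a) \<notin> At\<^sup>*" using ay yA unfolding Sf_def cls_def by simp
          have "{z. (y, z) \<in> At\<^sup>*} \<subseteq> {z. (a, z) \<in> At\<^sup>*}" using ay by auto
          moreover have "a \<in> {z. (a, z) \<in> At\<^sup>*}" "a \<notin> {z. (y, z) \<in> At\<^sup>*}" using nya by auto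
          ultimately have "{z. (y, z) \<in> At\<^sup>*} \<subset> {z. (a, z) \<in> At\<^sup>*}"
            by (intro psubsetI) auto
          then have "g y < g a" unfolding g_def by (rule psubset_card_mono[OF fin_reach[OF aA]])
          then show False using amin[OF yA] by simp
        qed
      qed
      have sink_edge: "\<And>u v. u \<in> Sf \<Longrightarrow> (u, v) \<in> At \<Longrightarrow> v \<in> Sf"
        using sink by blast
      have SfS: "Sf \<in> SCCS A At" unfolding Sf_def by (rule cls_SCCS[OF aA])
      have aSf: "a \<in> Sf" using aA unfolding Sf_def cls_def by simp
      have SfA: "Sf \<subset> A" using SCCS_proper[OF f c SfS] .
      define A0 where "A0 = A - Sf"
      define At0 where "At0 = restr At A0"
      have f0: "finite A0" using f unfolding A0_def by simp
      have w0: "At0 \<subseteq> A0 \<times> A0" unfolding At0_def restr_def by auto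
      have "A0 \<subset> A" unfolding A0_def using aSf aA by (intro psubsetI) auto
      then have cA0: "card A0 < card A" by (rule psubset_card_mono[OF f])
      obtain E0 where E0: "scc_rec base (Suc (card A0)) A0 At0 E0" using less.hyps[OF cA0 f0 w0] by blast
      have E0A0: "E0 \<subseteq> A0" using scc_rec_sub[OF E0] .
      define UPf where "UPf = UP_set A At Sf E0"
      have "UPf \<subset> A" unfolding UPf_def by (rule subset_psubset_trans[OF UP_sub SfA])
      then have cU: "card UPf < card A" by (rule psubset_card_mono[OF f])
      have fU: "finite UPf" using finite_subset[OF psubset_imp_subset[OF \<open>UPf \<subset> A\<close>] f] .
      have wU: "restr At UPf \<subseteq> UPf \<times> UPf" unfolding restr_def by auto
      obtain F where F: "scc_rec base (Suc (card UPf)) UPf (restr At UPf) F"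
        using less.hyps[OF cU fU wU] by blast
      have "UPf \<subseteq> Sf" unfolding UPf_def by (rule UP_sub)
      then have FSf: "F \<subseteq> Sf" using scc_rec_sub[OF F] by (rule subset_trans[rotated])
      define E where "E = E0 \<union> F"
      have EA: "E \<subseteq> A" using E0A0 FSf psubset_imp_subset[OF SfA] unfolding E_def A0_def by blast
      have path0: "\<And>x z. (x, z) \<in> At\<^sup>* \<Longrightarrow> z \<notin> Sf \<Longrightarrow> (x, z) \<in> At0\<^sup>*"
      proof -
        fix x z assume "(x, z) \<in> At\<^sup>*" "z \<notin> Sf"
        then show "(x, z) \<in> At0\<^sup>*"
        proof (induction rule: rtrancl_induct)
          case base
          then show ?case by simp
        next
          case (step y z)
          have "y \<notin> Sf" using step sink_edge by blast
          then have "(x, y) \<in> At0\<^sup>*" using step by blast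
          moreover have "(y, z) \<in> At0" using step w \<open>y \<notin> Sf\<close>
            unfolding At0_def restr_def A0_def by auto
          ultimately show ?case by simp
        qed
      qed
      have At0_sub: "At0 \<subseteq> At" unfolding At0_def restr_def by auto
      have "\<forall>S\<in>SCCS A At. scc_rec base (Suc (card (UP_set A At S E))) (UP_set A At S E)
           (restr At (UP_set A At S E)) (E \<inter> S)"
      proof
        fix S assume S: "S \<in> SCCS A At"
        show "scc_rec base (Suc (card (UP_set A At S E))) (UP_set A At S E)
           (restr At (UP_set A At S E)) (E \<inter> S)"
        proof (cases "S = Sf")
          case True
          have o: "E \<inter> S_out_minus A At Sf = E0 \<inter> S_out_minus A At Sf"
            using FSf unfolding S_out_minus_def E_def by auto
          have "UP_set A At Sf E = UPf" unfolding UPf_def UP_set_def D_set_def o ..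
          moreover have "E \<inter> Sf = F" using FSf E0A0 unfolding E_def A0_def by auto
          ultimately show ?thesis using F True by simp
        next
          case False
          have disj: "S \<inter> Sf = {}" using SCCS_disj[OF S SfS] False by blast
          have SA0: "S \<subseteq> A0" using SCCS_sub[OF S] disj unfolding A0_def by blast
          have S0: "S \<in> SCCS A0 At0"
          proof -
            have 3: "\<forall>x\<in>S. \<forall>y\<in>S. (x, y) \<in> At0\<^sup>* \<and> (y, x) \<in> At0\<^sup>*"
            proof (intro ballI)
              fix x y assume "x \<in> S" "y \<in> S"
              then have "(x, y) \<in> At\<^sup>*" "(y, x) \<in> At\<^sup>*" "x \<notin> Sf" "y \<notin> Sf"
                using S disj unfolding SCCS_iff by blast+
              then show "(x, y) \<in> At0\<^sup>* \<and> (y, x) \<in> At0\<^sup>*" using path0 by blast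
            qed
            have 4: "\<forall>T. T \<subseteq> A0 \<and> S \<subseteq> T \<and> (\<forall>x\<in>T. \<forall>y\<in>T. (x, y) \<in> At0\<^sup>* \<and> (y, x) \<in> At0\<^sup>*) \<longrightarrow> T = S"
            proof (intro allI impI)
              fix T assume T: "T \<subseteq> A0 \<and> S \<subseteq> T \<and> (\<forall>x\<in>T. \<forall>y\<in>T. (x, y) \<in> At0\<^sup>* \<and> (y, x) \<in> At0\<^sup>*)"
              then have "\<forall>x\<in>T. \<forall>y\<in>T. (x, y) \<in> At\<^sup>* \<and> (y, x) \<in> At\<^sup>*"
                using rtrancl_mono[OF At0_sub] by blast
              moreover have "T \<subseteq> A" using T unfolding A0_def by blast
              ultimately show "T = S" using S T unfolding SCCS_iff by blast
            qed
            show ?thesis unfolding SCCS_iff using SA0 SCCS_ne[OF S] 3 4 by blast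
          qed
          have o: "E \<inter> S_out_minus A At S = E0 \<inter> S_out_minus A0 At0 S"
          proof
            show "E \<inter> S_out_minus A At S \<subseteq> E0 \<inter> S_out_minus A0 At0 S"
            proof
              fix e assume e: "e \<in> E \<inter> S_out_minus A At S"
              then obtain b where b: "b \<in> S" "(e, b) \<in> At" "e \<notin> S" "e \<in> A"
                unfolding S_out_minus_def by blast
              have "e \<notin> Sf" using sink_edge b disj by blast
              then have "e \<in> E0" using e FSf unfolding E_def by blast
              moreover have "e \<in> A0" using \<open>e \<notin> Sf\<close> b unfolding A0_def by blast
              moreover have "(e, b) \<in> At0" using b \<open>e \<in> A0\<close> SA0 unfolding At0_def restr_def by blast
              ultimately show "e \<in> E0 \<inter> S_out_minus A0 At0 S" using b unfolding S_out_minus_def by blast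
            qed
          next
            show "E0 \<inter> S_out_minus A0 At0 S \<subseteq> E \<inter> S_out_minus A At S"
              using At0_sub unfolding S_out_minus_def E_def A0_def by blast
          qed
          have d: "D_set A At S E = D_set A0 At0 S E0"
          proof -
            have "\<And>x e. x \<in> S \<Longrightarrow> e \<in> E0 \<inter> S_out_minus A0 At0 S \<Longrightarrow> (e, x) \<in> At \<longleftrightarrow> (e, x) \<in> At0"
              using SA0 unfolding At0_def restr_def S_out_minus_def by blast
            then show ?thesis unfolding D_set_def o by blast
          qed
          have u: "UP_set A At S E = UP_set A0 At0 S E0" unfolding UP_set_def d ..
          have r: "restr At (UP_set A0 At0 S E0) = restr At0 (UP_set A0 At0 S E0)"
            using UP_sub[of A0 At0 S E0] SA0 unfolding At0_def restr_def by blast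
          have es: "E \<inter> S = E0 \<inter> S" using FSf disj unfolding E_def by blast
          show ?thesis unfolding u r es using scc_dec[OF f0 w0 _ E0 S0] by simp
        qed
      qed
      then have "scc_rec base (Suc (card A)) A At E" by (rule scc_intro[OF f lessI EA c])
      then show ?thesis by blast
    qed
  qed
qed




locale rmx =
  fixes AR :: "'a set" and Att :: "('a \<times> 'a) set" and AR' :: "'a set" and Att' :: "('a \<times> 'a) set"
  assumes wf1: "wf_AF AR Att" and wf2: "wf_AF AR' Att'" and rm: "rm_expansion AR Att AR' Att'"
begin

lemma f1: "finite AR" and w1: "Att \<subseteq> AR \<times> AR" and f2: "finite AR'" and w2: "Att' \<subseteq> AR' \<times> AR'"
  using wf1 wf2 unfolding wf_AF_def by auto

lemma sub: "AR \<subseteq> AR'" and attsub: "Att \<subseteq> Att'"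
  and cyc: "cycles Att' = cycles Att"
  and c3: "\<And>a b. a \<in> AR \<Longrightarrow> b \<in> AR' - AR \<Longrightarrow> reachable Att' a b \<Longrightarrow> \<forall>xs \<in> cycles Att'. a \<notin> set xs"
  using rm unfolding rm_expansion_def normal_expansion_def by auto

lemma old_att: "a \<in> AR \<Longrightarrow> b \<in> AR \<Longrightarrow> (a, b) \<in> Att' \<longleftrightarrow> (a, b) \<in> Att"
  using rm attsub unfolding rm_expansion_def normal_expansion_def by blast

lemma finAtt: "finite Att" using finite_subset[OF w1] f1 by blast
lemma finAtt': "finite Att'" using finite_subset[OF w2] f2 by blast

definition W where "W = {x \<in> AR'. \<exists>b \<in> AR' - AR. (x, b) \<in> Att'\<^sup>*}"
definition V where "V = W \<inter> AR"

lemma B_W: "AR' - AR \<subseteq> W" unfolding W_def by blast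

lemma W_sub: "W \<subseteq> AR'" unfolding W_def by blast

lemma W_closed: "closedV Att' W"
  unfolding closedV_def
proof (intro ballI allI impI)
  fix x y assume x: "x \<in> W" and yx: "(y, x) \<in> Att'"
  obtain b where b: "b \<in> AR' - AR" "(x, b) \<in> Att'\<^sup>*" using x unfolding W_def by blast
  have "(y, b) \<in> Att'\<^sup>*" using yx b(2) by (rule converse_rtrancl_into_rtrancl)
  moreover have "y \<in> AR'" using yx w2 by blast
  ultimately show "y \<in> W" using b(1) unfolding W_def by blast
qed

lemma W_acyc: "\<forall>x\<in>W. (x, x) \<notin> Att'\<^sup>+"
proof (intro ballI notI)
  fix x assume x: "x \<in> W" and c: "(x, x) \<in> Att'\<^sup>+"
  obtain xs where xs: "attack_cycle Att' xs" "x \<in> set xs" using cycle_exists[OF c] by blast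
  then have xsc: "xs \<in> cycles Att'" unfolding cycles_def by simp
  obtain b where b: "b \<in> AR' - AR" "(x, b) \<in> Att'\<^sup>*" using x unfolding W_def by blast
  show False
  proof (cases "x \<in> AR")
    case True
    have "reachable Att' x b" using b(2) reach_iff by metis
    then show False using c3[OF True b(1)] xsc xs(2) by blast
  next
    case False
    have "attack_cycle Att xs" using xsc cyc unfolding cycles_def by blast
    then have "x \<in> AR" using cycle_in_AR[OF _ w1 xs(2)] by blast
    then show False using False by blast
  qed
qed

lemma V_closed: "closedV Att V"
  unfolding closedV_def
proof (intro ballI allI impI)
  fix x y assume x: "x \<in> V" and yx: "(y, x) \<in> Att"
  have "y \<in> AR" using yx w1 by blast
  moreover have "y \<in> W" using W_closed x yx attsub unfolding closedV_def V_def by blast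
  ultimately show "y \<in> V" unfolding V_def by blast
qed

lemma V_acyc: "\<forall>x\<in>V. (x, x) \<notin> Att\<^sup>+"
  using W_acyc trancl_mono[OF _ attsub] unfolding V_def by blast

lemma wfW: "wf (relV Att' W)" using wf_relV[OF finAtt' W_acyc] .
lemma wfV: "wf (relV Att V)" using wf_relV[OF finAtt V_acyc] .
lemma V_sub: "V \<subseteq> AR" unfolding V_def by blast

lemma att_B_V: "b \<in> AR' - AR \<Longrightarrow> (x, b) \<in> Att' \<Longrightarrow> x \<in> AR \<Longrightarrow> x \<in> V"
  using W_closed B_W unfolding closedV_def V_def by blast

lemma lift_complete:
  assumes S: "complete_ext AR Att S" and att: "\<forall>b\<in>AR' - AR. \<exists>s\<in>S. (s, b) \<in> Att'"
  shows "complete_ext AR' Att' S"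
proof -
  have SA: "S \<subseteq> AR" and cf: "conflict_free Att S" and acc: "\<forall>a\<in>S. acceptable Att a S"
    and cmp: "\<forall>a\<in>AR. acceptable Att a S \<longrightarrow> a \<in> S"
    using S unfolding complete_ext_def admissible_def by auto
  have cf': "conflict_free Att' S"
    unfolding conflict_free_def
  proof (intro ballI notI)
    fix a b assume "a \<in> S" "b \<in> S" "(a, b) \<in> Att'"
    then have "(a, b) \<in> Att" using old_att SA by blast
    then show False using cf \<open>a \<in> S\<close> \<open>b \<in> S\<close> unfolding conflict_free_def by blast
  qed
  have acc': "\<forall>a\<in>S. acceptable Att' a S"
  proof (intro ballI)
    fix a assume aS: "a \<in> S"
    show "acceptable Att' a S" unfolding acceptable_def
    proof (intro allI impI)
      fix c assume ca: "(c, a) \<in> Att'"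
      show "\<exists>d\<in>S. (d, c) \<in> Att'"
      proof (cases "c \<in> AR")
        case True
        then have "(c, a) \<in> Att" using old_att ca SA aS by blast
        then obtain d where "d \<in> S" "(d, c) \<in> Att" using acc aS unfolding acceptable_def by blast
        then show ?thesis using attsub by blast
      next
        case False
        then have "c \<in> AR' - AR" using ca w2 by blast
        then show ?thesis using att by blast
      qed
    qed
  qed
  have cmp': "\<forall>a\<in>AR'. acceptable Att' a S \<longrightarrow> a \<in> S"
  proof (intro ballI impI)
    fix a assume aA: "a \<in> AR'" and ac: "acceptable Att' a S"
    show "a \<in> S"
    proof (cases "a \<in> AR")
      case True
      have "acceptable Att a S" unfolding acceptable_def
      proof (intro allI impI)
        fix c assume ca: "(c, a) \<in> Att"
        then have "(c, a) \<in> Att'" "c \<in> AR" using attsub w1 by auto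
        then obtain d where d: "d \<in> S" "(d, c) \<in> Att'" using ac unfolding acceptable_def by blast
        then have "(d, c) \<in> Att" using old_att SA \<open>c \<in> AR\<close> by blast
        then show "\<exists>d\<in>S. (d, c) \<in> Att" using d(1) by blast
      qed
      then show ?thesis using cmp True by blast
    next
      case False
      then obtain s where s: "s \<in> S" "(s, a) \<in> Att'" using att aA by blast
      then obtain d where d: "d \<in> S" "(d, s) \<in> Att'" using ac unfolding acceptable_def by blast
      then have "(d, s) \<in> Att" using old_att SA s(1) by blast
      then show ?thesis using cf d(1) s(1) unfolding conflict_free_def by blast
    qed
  qed
  show ?thesis unfolding complete_ext_def admissible_def using SA sub cf' acc' cmp' by blast
qed

lemma restrict_complete:
  assumes S: "complete_ext AR' Att' S" and SA: "S \<subseteq> AR" and att: "\<forall>b\<in>AR' - AR. \<exists>s\<in>S. (s, b) \<in> Att'"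
  shows "complete_ext AR Att S"
proof -
  have cf': "conflict_free Att' S" and acc': "\<forall>a\<in>S. acceptable Att' a S"
    and cmp': "\<forall>a\<in>AR'. acceptable Att' a S \<longrightarrow> a \<in> S"
    using S unfolding complete_ext_def admissible_def by auto
  have cf: "conflict_free Att S" using cf' attsub unfolding conflict_free_def by blast
  have acc: "\<forall>a\<in>S. acceptable Att a S"
  proof (intro ballI)
    fix a assume aS: "a \<in> S"
    show "acceptable Att a S" unfolding acceptable_def
    proof (intro allI impI)
      fix c assume ca: "(c, a) \<in> Att"
      then have "(c, a) \<in> Att'" "c \<in> AR" using attsub w1 by auto
      then obtain d where d: "d \<in> S" "(d, c) \<in> Att'" using acc' aS unfolding acceptable_def by blast
      then have "(d, c) \<in> Att" using old_att SA \<open>c \<in> AR\<close> by blast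
      then show "\<exists>d\<in>S. (d, c) \<in> Att" using d(1) by blast
    qed
  qed
  have cmp: "\<forall>a\<in>AR. acceptable Att a S \<longrightarrow> a \<in> S"
  proof (intro ballI impI)
    fix a assume aA: "a \<in> AR" and ac: "acceptable Att a S"
    have "acceptable Att' a S" unfolding acceptable_def
    proof (intro allI impI)
      fix c assume ca: "(c, a) \<in> Att'"
      show "\<exists>d\<in>S. (d, c) \<in> Att'"
      proof (cases "c \<in> AR")
        case True
        then have "(c, a) \<in> Att" using old_att ca aA by blast
        then obtain d where "d \<in> S" "(d, c) \<in> Att" using ac unfolding acceptable_def by blast
        then show ?thesis using attsub by blast
      next
        case False
        then have "c \<in> AR' - AR" using ca w2 by blast
        then show ?thesis using att by blast
      qed
    qed
    then show "a \<in> S" using cmp' aA sub by blast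
  qed
  show ?thesis unfolding complete_ext_def admissible_def using SA cf acc cmp by blast
qed


lemma case2_all:
  assumes G: "complete_ext AR' Att' G" and nG: "\<not> G \<subseteq> AR" and S: "complete_ext AR' Att' S"
  shows "\<not> S \<subseteq> AR"
proof -
  obtain x where x: "x \<in> G" "x \<notin> AR" using nG by blast
  have "x \<in> AR'" using G x(1) unfolding complete_ext_def admissible_def by blast
  then have xW: "x \<in> W" using B_W x(2) by blast
  have "GL Att' W G" "GL Att' W S" using complete_GL[OF wfW W_closed W_sub] G S by blast+
  then have "x \<in> S" using GL_unique[OF wfW W_closed _ _ xW] x(1) by blast
  then show ?thesis using x(2) by blast
qed

lemma GLV_attB:
  assumes G: "complete_ext AR' Att' G" and GA: "G \<subseteq> AR" and S: "GL Att V S"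
  shows "\<forall>b\<in>AR' - AR. \<exists>s\<in>S. (s, b) \<in> Att'"
proof
  fix b assume b: "b \<in> AR' - AR"
  have attG: "\<forall>b\<in>AR' - AR. \<exists>g\<in>G. (g, b) \<in> Att'"
  proof
    fix b assume b: "b \<in> AR' - AR"
    then have "b \<in> W" "b \<notin> G" using B_W GA by blast+
    then show "\<exists>g\<in>G. (g, b) \<in> Att'" using complete_attacks[OF wfW W_closed W_sub G] by blast
  qed
  have Gc: "complete_ext AR Att G" using restrict_complete[OF G GA attG] .
  have GG: "GL Att V G" using complete_GL[OF wfV V_closed V_sub Gc] .
  obtain g where g: "g \<in> G" "(g, b) \<in> Att'" using attG b by blast
  have "g \<in> V" using att_B_V[OF b g(2)] g(1) GA by blast
  then have "g \<in> S" using GL_unique[OF wfV V_closed GG S] g(1) by blast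
  then show "\<exists>s\<in>S. (s, b) \<in> Att'" using g(2) by blast
qed

lemma case1_attB:
  assumes G: "complete_ext AR' Att' G" and GA: "G \<subseteq> AR" and S: "complete_ext AR Att S"
  shows "\<forall>b\<in>AR' - AR. \<exists>s\<in>S. (s, b) \<in> Att'"
  using GLV_attB[OF G GA complete_GL[OF wfV V_closed V_sub S]] .

lemma case1_comp_eq:
  assumes G: "complete_ext AR' Att' G" and GA: "G \<subseteq> AR"
  shows "complete_ext AR' Att' S \<longleftrightarrow> complete_ext AR Att S"
proof
  assume S: "complete_ext AR' Att' S"
  have "GL Att' W G" "GL Att' W S" using complete_GL[OF wfW W_closed W_sub] G S by blast+
  then have eq: "\<And>x. x \<in> W \<Longrightarrow> x \<in> S \<longleftrightarrow> x \<in> G" using GL_unique[OF wfW W_closed] by blast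
  have "S \<subseteq> AR'" using S unfolding complete_ext_def admissible_def by blast
  moreover have "\<And>b. b \<in> AR' - AR \<Longrightarrow> b \<notin> S" using eq B_W GA by blast
  ultimately have SA: "S \<subseteq> AR" by blast
  have "\<forall>b\<in>AR' - AR. \<exists>s\<in>S. (s, b) \<in> Att'"
  proof
    fix b assume b: "b \<in> AR' - AR"
    then have "b \<in> W" "b \<notin> S" using B_W SA by blast+
    then show "\<exists>s\<in>S. (s, b) \<in> Att'" using complete_attacks[OF wfW W_closed W_sub S] by blast
  qed
  then show "complete_ext AR Att S" using restrict_complete[OF S SA] by blast
next
  assume S: "complete_ext AR Att S"
  then show "complete_ext AR' Att' S" using lift_complete case1_attB[OF G GA S] by blast
qed

lemma range_lift:
  assumes S: "S \<subseteq> AR" and att: "\<forall>b\<in>AR' - AR. \<exists>s\<in>S. (s, b) \<in> Att'"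
  shows "S \<union> plus Att' S = (S \<union> plus Att S) \<union> (AR' - AR)"
proof
  show "S \<union> plus Att' S \<subseteq> S \<union> plus Att S \<union> (AR' - AR)"
  proof
    fix y assume y: "y \<in> S \<union> plus Att' S"
    show "y \<in> S \<union> plus Att S \<union> (AR' - AR)"
    proof (cases "y \<in> S")
      case True then show ?thesis by blast
    next
      case False
      then obtain s where s: "s \<in> S" "(s, y) \<in> Att'" using y unfolding plus_def by blast
      show ?thesis
      proof (cases "y \<in> AR")
        case True
        then have "(s, y) \<in> Att" using old_att s S by blast
        then show ?thesis using s(1) unfolding plus_def by blast
      next
        case False
        then show ?thesis using s(2) w2 by blast
      qed
    qed
  qed
next
  show "S \<union> plus Att S \<union> (AR' - AR) \<subseteq> S \<union> plus Att' S"
    using att attsub unfolding plus_def by blast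
qed

lemma case1_semi_eq:
  assumes G: "complete_ext AR' Att' G" and GA: "G \<subseteq> AR"
  shows "semi_stable_ext AR' Att' S \<longleftrightarrow> semi_stable_ext AR Att S"
proof -
  have rng: "\<And>S. complete_ext AR Att S \<Longrightarrow> S \<union> plus Att' S = (S \<union> plus Att S) \<union> (AR' - AR)"
    using range_lift case1_attB[OF G GA] unfolding complete_ext_def admissible_def by blast
  have rsub: "\<And>S. complete_ext AR Att S \<Longrightarrow> S \<union> plus Att S \<subseteq> AR"
    using plus_sub[OF w1] unfolding complete_ext_def admissible_def by blast
  have key: "\<And>X Y. X \<subseteq> AR \<Longrightarrow> Y \<subseteq> AR \<Longrightarrow> (X \<union> (AR' - AR) \<subset> Y \<union> (AR' - AR)) \<longleftrightarrow> X \<subset> Y"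
    by blast
  have "\<And>S T. complete_ext AR Att S \<Longrightarrow> complete_ext AR Att T \<Longrightarrow>
      (S \<union> plus Att' S \<subset> T \<union> plus Att' T) \<longleftrightarrow> (S \<union> plus Att S \<subset> T \<union> plus Att T)"
    using rng rsub key by metis
  then show ?thesis unfolding semi_stable_ext_def using case1_comp_eq[OF G GA] by metis
qed


lemma pref_eq1:
  assumes G: "complete_ext AR' Att' G" and GA: "G \<subseteq> AR"
  shows "preferred_ext AR' Att' S \<longleftrightarrow> preferred_ext AR Att S"
  by (simp only: pref_iff[OF f2] pref_iff[OF f1] case1_comp_eq[OF G GA])

lemma thm_complete:
  assumes E: "complete_ext AR Att E"
  shows "\<exists>E'. complete_ext AR' Att' E' \<and> (\<not> E' \<subseteq> AR \<or> E' = E)"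
proof -
  obtain G where G: "complete_ext AR' Att' G" using complete_exists[OF f2] by blast
  show ?thesis
  proof (cases "G \<subseteq> AR")
    case True
    then show ?thesis using case1_comp_eq[OF G True] E by blast
  next
    case False
    then show ?thesis using G by blast
  qed
qed

lemma thm_preferred:
  assumes E: "preferred_ext AR Att E"
  shows "\<exists>E'. preferred_ext AR' Att' E' \<and> (\<not> E' \<subseteq> AR \<or> E' = E)"
proof -
  obtain G where G: "complete_ext AR' Att' G" using complete_exists[OF f2] by blast
  show ?thesis
  proof (cases "G \<subseteq> AR")
    case True
    then show ?thesis using pref_eq1[OF G True] E by blast
  next
    case False
    obtain P where P: "preferred_ext AR' Att' P" using adm_ext_pref[OF f2 adm_empty] by blast
    then have "\<not> P \<subseteq> AR" using case2_all[OF G False pref_complete[OF P]] by blast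
    then show ?thesis using P by blast
  qed
qed

lemma thm_grounded:
  assumes E: "grounded_ext AR Att E"
  shows "\<exists>E'. grounded_ext AR' Att' E' \<and> (\<not> E' \<subseteq> AR \<or> E' = E)"
proof -
  obtain G where G: "complete_ext AR' Att' G" using complete_exists[OF f2] by blast
  show ?thesis
  proof (cases "G \<subseteq> AR")
    case True
    have "grounded_ext AR' Att' E \<longleftrightarrow> grounded_ext AR Att E"
      unfolding grounded_ext_def by (simp only: case1_comp_eq[OF G True])
    then show ?thesis using E by blast
  next
    case False
    obtain P where P: "grounded_ext AR' Att' P" using grounded_exists[OF f2] by blast
    then have "\<not> P \<subseteq> AR" using case2_all[OF G False] unfolding grounded_ext_def by blast
    then show ?thesis using P by blast
  qed
qed

lemma thm_semi:
  assumes E: "semi_stable_ext AR Att E"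
  shows "\<exists>E'. semi_stable_ext AR' Att' E' \<and> (\<not> E' \<subseteq> AR \<or> E' = E)"
proof -
  obtain G where G: "complete_ext AR' Att' G" using complete_exists[OF f2] by blast
  show ?thesis
  proof (cases "G \<subseteq> AR")
    case True
    then show ?thesis using case1_semi_eq[OF G True] E by blast
  next
    case False
    obtain P where P: "semi_stable_ext AR' Att' P" using semi_stable_exists[OF f2 w2] by blast
    then have "\<not> P \<subseteq> AR" using case2_all[OF G False semi_stable_complete[OF P]] by blast
    then show ?thesis using P by blast
  qed
qed

lemma thm_ideal:
  assumes E: "ideal_ext AR Att E"
  shows "\<exists>E'. ideal_ext AR' Att' E' \<and> (\<not> E' \<subseteq> AR \<or> E' = E)"
proof -
  obtain G where G: "complete_ext AR' Att' G" using complete_exists[OF f2] by blast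
  show ?thesis
  proof (cases "G \<subseteq> AR")
    case True
    have "ideal_ext AR' Att' E \<longleftrightarrow> idealQ AR' Att' (preferred_ext AR' Att') E" by (rule ideal_is_idealQ)
    also have "\<dots> \<longleftrightarrow> complete_ext AR' Att' E \<and> (\<forall>P. preferred_ext AR' Att' P \<longrightarrow> E \<subseteq> P) \<and>
     (\<forall>T. complete_ext AR' Att' T \<and> (\<forall>P. preferred_ext AR' Att' P \<longrightarrow> T \<subseteq> P) \<and> E \<subseteq> T \<longrightarrow> T = E)"
      by (rule idealQ_iff[OF f2 pref_complete])
    also have "\<dots> \<longleftrightarrow> complete_ext AR Att E \<and> (\<forall>P. preferred_ext AR Att P \<longrightarrow> E \<subseteq> P) \<and>
     (\<forall>T. complete_ext AR Att T \<and> (\<forall>P. preferred_ext AR Att P \<longrightarrow> T \<subseteq> P) \<and> E \<subseteq> T \<longrightarrow> T = E)"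
      by (simp only: pref_eq1[OF G True] case1_comp_eq[OF G True])
    also have "\<dots> \<longleftrightarrow> idealQ AR Att (preferred_ext AR Att) E"
      by (rule idealQ_iff[OF f1 pref_complete, symmetric])
    also have "\<dots> \<longleftrightarrow> ideal_ext AR Att E" by (rule ideal_is_idealQ[symmetric])
    finally have "ideal_ext AR' Att' E \<longleftrightarrow> ideal_ext AR Att E" .
    then show ?thesis using E by blast
  next
    case False
    obtain P where P: "idealQ AR' Att' (preferred_ext AR' Att') P"
      using idealQ_exists_above[OF f2 adm_empty, of "preferred_ext AR' Att'"] by blast
    have "complete_ext AR' Att' P" using idealQ_complete[OF pref_complete P] .
    then have "\<not> P \<subseteq> AR" using case2_all[OF G False] by blast
    then show ?thesis using P ideal_is_idealQ by blast
  qed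
qed

lemma thm_eager:
  assumes E: "eager_ext AR Att E"
  shows "\<exists>E'. eager_ext AR' Att' E' \<and> (\<not> E' \<subseteq> AR \<or> E' = E)"
proof -
  obtain G where G: "complete_ext AR' Att' G" using complete_exists[OF f2] by blast
  show ?thesis
  proof (cases "G \<subseteq> AR")
    case True
    have "eager_ext AR' Att' E \<longleftrightarrow> idealQ AR' Att' (semi_stable_ext AR' Att') E" by (rule eager_is_idealQ)
    also have "\<dots> \<longleftrightarrow> complete_ext AR' Att' E \<and> (\<forall>P. semi_stable_ext AR' Att' P \<longrightarrow> E \<subseteq> P) \<and>
     (\<forall>T. complete_ext AR' Att' T \<and> (\<forall>P. semi_stable_ext AR' Att' P \<longrightarrow> T \<subseteq> P) \<and> E \<subseteq> T \<longrightarrow> T = E)"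
      by (rule idealQ_iff[OF f2 semi_stable_complete])
    also have "\<dots> \<longleftrightarrow> complete_ext AR Att E \<and> (\<forall>P. semi_stable_ext AR Att P \<longrightarrow> E \<subseteq> P) \<and>
     (\<forall>T. complete_ext AR Att T \<and> (\<forall>P. semi_stable_ext AR Att P \<longrightarrow> T \<subseteq> P) \<and> E \<subseteq> T \<longrightarrow> T = E)"
      by (simp only: case1_semi_eq[OF G True] case1_comp_eq[OF G True])
    also have "\<dots> \<longleftrightarrow> idealQ AR Att (semi_stable_ext AR Att) E"
      by (rule idealQ_iff[OF f1 semi_stable_complete, symmetric])
    also have "\<dots> \<longleftrightarrow> eager_ext AR Att E" by (rule eager_is_idealQ[symmetric])
    finally have "eager_ext AR' Att' E \<longleftrightarrow> eager_ext AR Att E" .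
    then show ?thesis using E by blast
  next
    case False
    obtain P where P: "idealQ AR' Att' (semi_stable_ext AR' Att') P"
      using idealQ_exists_above[OF f2 adm_empty, of "semi_stable_ext AR' Att'"] by blast
    have "complete_ext AR' Att' P" using idealQ_complete[OF semi_stable_complete P] .
    then have "\<not> P \<subseteq> AR" using case2_all[OF G False] by blast
    then show ?thesis using P eager_is_idealQ by blast
  qed
qed


lemma plus_restr: "S \<subseteq> AR \<Longrightarrow> plus Att S = plus Att' S \<inter> AR"
  unfolding plus_def using old_att w1 by blast

lemma thm_stage:
  assumes E: "stage_ext AR Att E"
  shows "\<exists>E'. stage_ext AR' Att' E' \<and> (\<not> E' \<subseteq> AR \<or> E' = E)"
proof (cases "stage_ext AR' Att' E")
  case True
  then show ?thesis by blast
next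
  case notst: False
  have EA: "E \<subseteq> AR" and cfE: "conflict_free Att E"
    and Emax: "\<And>T. T \<subseteq> AR \<Longrightarrow> conflict_free Att T \<Longrightarrow> \<not> (E \<union> plus Att E \<subset> T \<union> plus Att T)"
    using E unfolding stage_ext_def by auto
  have cfE': "conflict_free Att' E" using cfE EA old_att unfolding conflict_free_def by blast
  obtain T2 where T2: "T2 \<subseteq> AR'" "conflict_free Att' T2" "E \<union> plus Att' E \<subset> T2 \<union> plus Att' T2"
    using notst EA sub cfE' unfolding stage_ext_def by blast
  define rg where "rg = (\<lambda>X. X \<union> plus Att' X)"
  have rgsub: "\<And>X. X \<subseteq> AR' \<Longrightarrow> rg X \<subseteq> AR'" unfolding rg_def using plus_sub[OF w2] by blast
  have rgfin: "\<And>X. X \<subseteq> AR' \<Longrightarrow> finite (rg X)" using rgsub f2 finite_subset by blast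
  define C where "C = {T. T \<subseteq> AR' \<and> conflict_free Att' T \<and> rg E \<subseteq> rg T}"
  have fC: "finite C" unfolding C_def by (rule finite_subset[of _ "Pow AR'"]) (auto simp: f2)
  have T2C: "T2 \<in> C" using T2 unfolding C_def rg_def by auto
  define mx where "mx = Max ((\<lambda>X. card (rg X)) ` C)"
  have "mx \<in> (\<lambda>X. card (rg X)) ` C" unfolding mx_def using fC T2C by (intro Max_in) auto
  then obtain T where TC: "T \<in> C" and Tm: "card (rg T) = mx" by blast
  have le: "\<And>X. X \<in> C \<Longrightarrow> card (rg X) \<le> card (rg T)" unfolding Tm mx_def using fC by simp
  have TA': "T \<subseteq> AR'" and cfT': "conflict_free Att' T" and ET: "rg E \<subseteq> rg T" using TC unfolding C_def by auto
  have Tst: "stage_ext AR' Att' T"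
    unfolding stage_ext_def
  proof (intro conjI notI)
    show "T \<subseteq> AR'" by (rule TA')
    show "conflict_free Att' T" by (rule cfT')
    assume "\<exists>T3. T3 \<subseteq> AR' \<and> conflict_free Att' T3 \<and> T \<union> plus Att' T \<subset> T3 \<union> plus Att' T3"
    then obtain T3 where T3: "T3 \<subseteq> AR'" "conflict_free Att' T3" "rg T \<subset> rg T3" unfolding rg_def by blast
    have "rg E \<subseteq> rg T3" using ET T3(3) by (meson order_trans psubset_imp_subset)
    then have "T3 \<in> C" using T3 unfolding C_def by blast
    moreover have "card (rg T) < card (rg T3)" by (rule psubset_card_mono[OF rgfin[OF T3(1)] T3(3)])
    ultimately show False using le by fastforce
  qed
  have "card (rg E) < card (rg T2)"
    using psubset_card_mono[OF rgfin[OF T2(1)]] T2(3) unfolding rg_def by blast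
  also have "\<dots> \<le> card (rg T)" using le[OF T2C] .
  finally have neq: "rg E \<noteq> rg T" by auto
  show ?thesis
  proof (cases "T \<subseteq> AR")
    case False
    then show ?thesis using Tst by blast
  next
    case TA: True
    have cfT: "conflict_free Att T" using cfT' attsub unfolding conflict_free_def by blast
    have rE: "E \<union> plus Att E = rg E \<inter> AR" unfolding rg_def using plus_restr[OF EA] EA by blast
    have rT: "T \<union> plus Att T = rg T \<inter> AR" unfolding rg_def using plus_restr[OF TA] TA by blast
    have "E \<union> plus Att E \<subseteq> T \<union> plus Att T" unfolding rE rT using ET by blast
    moreover have "\<not> (E \<union> plus Att E \<subset> T \<union> plus Att T)" using Emax[OF TA cfT] .
    ultimately have req: "E \<union> plus Att E = T \<union> plus Att T" by blast
    have eqV: "\<And>x. x \<in> V \<Longrightarrow> x \<in> E \<longleftrightarrow> x \<in> T"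
      using range_unique[OF wfV V_closed cfE cfT] req by blast
    have "rg T \<subseteq> rg E"
    proof
      fix y assume y: "y \<in> rg T"
      have yA: "y \<in> AR'" using y rgsub[OF TA'] by blast
      show "y \<in> rg E"
      proof (cases "y \<in> AR")
        case True
        then show ?thesis using y req rE rT by blast
      next
        case False
        then have "y \<notin> T" using TA by blast
        then obtain t where t: "t \<in> T" "(t, y) \<in> Att'" using y unfolding rg_def plus_def by blast
        have "t \<in> V" using att_B_V[OF _ t(2)] yA False t(1) TA by blast
        then have "t \<in> E" using eqV t(1) by blast
        then show ?thesis using t(2) unfolding rg_def plus_def by blast
      qed
    qed
    then show ?thesis using ET neq by blast
  qed
qed


lemma cls_W: "x \<in> W \<Longrightarrow> cls AR' Att' x = {x}"
proof -
  assume xW: "x \<in> W"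
  have "y = x" if "y \<in> cls AR' Att' x" for y
  proof (rule ccontr)
    assume "y \<noteq> x"
    have "(x, y) \<in> Att'\<^sup>*" "(y, x) \<in> Att'\<^sup>*" using that unfolding cls_def by auto
    then have "(x, y) \<in> Att'\<^sup>+" using \<open>y \<noteq> x\<close> by (metis rtrancl_eq_or_trancl)
    then have "(x, x) \<in> Att'\<^sup>+" using \<open>(y, x) \<in> Att'\<^sup>*\<close> by (rule trancl_rtrancl_trancl)
    then show False using W_acyc xW by blast
  qed
  moreover have "x \<in> cls AR' Att' x" using xW W_sub unfolding cls_def by auto
  ultimately show ?thesis by blast
qed

lemma reach_noW:
  assumes x: "x \<in> AR" "x \<notin> W" and xz: "(x, z) \<in> Att'\<^sup>*"
  shows "z \<in> AR \<and> (x, z) \<in> Att\<^sup>*"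
  using xz
proof (induction rule: rtrancl_induct)
  case base
  then show ?case using x by simp
next
  case (step y z)
  have zA': "z \<in> AR'" using step(2) w2 by blast
  have zA: "z \<in> AR"
  proof (rule ccontr)
    assume "z \<notin> AR"
    have "(x, z) \<in> Att'\<^sup>*" using step(1,2) by (rule rtrancl.rtrancl_into_rtrancl)
    moreover have "x \<in> AR'" using x(1) sub by blast
    ultimately have "x \<in> W" using zA' \<open>z \<notin> AR\<close> unfolding W_def by blast
    then show False using x(2) by blast
  qed
  have "(y, z) \<in> Att" using old_att step zA by blast
  then show ?case using step zA by (meson rtrancl.rtrancl_into_rtrancl)
qed

lemma cls_eq: "x \<in> AR \<Longrightarrow> cls AR' Att' x = cls AR Att x"
proof -
  assume xA: "x \<in> AR"
  have sub1: "cls AR Att x \<subseteq> cls AR' Att' x"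
    unfolding cls_def using rtrancl_mono[OF attsub] sub by blast
  have xin: "x \<in> cls AR Att x" using xA unfolding cls_def by simp
  show ?thesis
  proof (cases "x \<in> W")
    case True
    then have cx: "cls AR' Att' x = {x}" by (rule cls_W)
    show ?thesis using sub1 xin unfolding cx by blast
  next
    case False
    have "cls AR' Att' x \<subseteq> cls AR Att x"
    proof
      fix y assume "y \<in> cls AR' Att' x"
      then have xy: "(x, y) \<in> Att'\<^sup>*" and yx: "(y, x) \<in> Att'\<^sup>*" unfolding cls_def by auto
      have yA: "y \<in> AR" and xy0: "(x, y) \<in> Att\<^sup>*" using reach_noW[OF xA False xy] by auto
      have "y \<notin> W"
      proof
        assume "y \<in> W"
        then obtain b where "b \<in> AR' - AR" "(y, b) \<in> Att'\<^sup>*" unfolding W_def by blast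
        moreover have "(x, b) \<in> Att'\<^sup>*" using xy \<open>(y, b) \<in> Att'\<^sup>*\<close> by (rule rtrancl_trans)
        moreover have "x \<in> AR'" using xA sub by blast
        ultimately have "x \<in> W" unfolding W_def by blast
        then show False using False by blast
      qed
      then have "(y, x) \<in> Att\<^sup>*" using reach_noW[OF yA _ yx] by blast
      then show "y \<in> cls AR Att x" using yA xy0 unfolding cls_def by blast
    qed
    then show ?thesis using sub1 by blast
  qed
qed

lemma SCCS'_cases:
  assumes S: "S \<in> SCCS AR' Att'"
  shows "(\<exists>b\<in>AR' - AR. S = {b}) \<or> S \<in> SCCS AR Att"
proof -
  obtain x where x: "x \<in> S" using SCCS_ne[OF S] by blast
  have Sx: "S = cls AR' Att' x" using SCCS_cls[OF S x] .
  have xA': "x \<in> AR'" using SCCS_sub[OF S] x by blast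
  show ?thesis
  proof (cases "x \<in> AR")
    case True
    then show ?thesis using Sx cls_eq cls_SCCS by metis
  next
    case False
    then have "x \<in> W" using B_W xA' by blast
    then show ?thesis using Sx cls_W xA' False by blast
  qed
qed

lemma thm_scc:
  assumes B1: "\<And>A At. finite A \<Longrightarrow> At \<subseteq> A \<times> A \<Longrightarrow> \<exists>E. base A At E \<and> E \<subseteq> A"
    and B3: "\<And>x F. base {x} {} F \<Longrightarrow> F = {x}"
    and E: "scc_rec base (Suc (card AR)) AR Att E"
  shows "\<exists>E'. scc_rec base (Suc (card AR')) AR' Att' E' \<and> (\<not> E' \<subseteq> AR \<or> E' = E)"
proof -
  obtain G where G: "complete_ext AR' Att' G" using complete_exists[OF f2] by blast
  show ?thesis
  proof (cases "G \<subseteq> AR")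
    case False
    obtain E' where E': "scc_rec base (Suc (card AR')) AR' Att' E'"
      using scc_exists[where base=base, OF B1 f2 w2] by blast
    have g1: "GL Att' W E'" using scc_GL[OF f2 w2 W_sub W_acyc B3 lessI E'] .
    have g2: "GL Att' W G" using complete_GL[OF wfW W_closed W_sub G] .
    obtain x where x: "x \<in> G" "x \<notin> AR" using False by blast
    have "x \<in> AR'" using G x(1) unfolding complete_ext_def admissible_def by blast
    then have xW: "x \<in> W" using B_W x(2) by blast
    have "x \<in> E'" using GL_unique[OF wfW W_closed g1 g2 xW] x(1) by blast
    then show ?thesis using E' x(2) by blast
  next
    case GA: True
    show ?thesis
    proof (cases "AR' - AR = {}")
      case True
      then have AA: "AR' = AR" using sub by blast
      have "Att' = Att"
      proof
        show "Att' \<subseteq> Att"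
        proof
          fix p assume p: "p \<in> Att'"
          obtain a b where ab: "p = (a, b)" by (cases p)
          then have "a \<in> AR" "b \<in> AR" using p w2 AA by auto
          then show "p \<in> Att" using old_att p ab by blast
        qed
        show "Att \<subseteq> Att'" by (rule attsub)
      qed
      then show ?thesis using E AA by blast
    next
      case False
      then obtain b0 where b0: "b0 \<in> AR' - AR" by blast
      have GLE: "GL Att V E" using scc_GL[OF f1 w1 V_sub V_acyc B3 lessI E] .
      have attE: "\<forall>b\<in>AR' - AR. \<exists>e\<in>E. (e, b) \<in> Att'" using GLV_attB[OF G GA GLE] .
      have EA: "E \<subseteq> AR" using scc_rec_sub[OF E] .
      have EA': "E \<subseteq> AR'" using EA sub by blast
      obtain e0 where e0: "e0 \<in> E" using attE b0 by blast
      have e0A: "e0 \<in> AR" using e0 EA by blast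
      have c: "card (SCCS AR' Att') \<noteq> 1"
      proof
        assume "card (SCCS AR' Att') = 1"
        then have "SCCS AR' Att' = {AR'}" using SCCS_card1[OF f2] by blast
        moreover have "{b0} \<in> SCCS AR' Att'" using cls_SCCS[of b0 AR' Att'] cls_W[of b0] b0 B_W by auto
        ultimately have "AR' = {b0}" by blast
        then show False using e0A sub b0 by blast
      qed
      have "\<forall>S\<in>SCCS AR' Att'. scc_rec base (Suc (card (UP_set AR' Att' S E))) (UP_set AR' Att' S E)
           (restr Att' (UP_set AR' Att' S E)) (E \<inter> S)"
      proof
        fix S assume S: "S \<in> SCCS AR' Att'"
        show "scc_rec base (Suc (card (UP_set AR' Att' S E))) (UP_set AR' Att' S E)
           (restr Att' (UP_set AR' Att' S E)) (E \<inter> S)"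
        proof (cases "\<exists>b\<in>AR' - AR. S = {b}")
          case True
          then obtain b where b: "b \<in> AR' - AR" "S = {b}" by blast
          obtain e where e: "e \<in> E" "(e, b) \<in> Att'" using attE b(1) by blast
          have "e \<in> S_out_minus AR' Att' S" using e EA' EA b unfolding S_out_minus_def by auto
          then have "b \<in> D_set AR' Att' S E" using e b unfolding D_set_def by blast
          then have u: "UP_set AR' Att' S E = {}" unfolding UP_set_def using b(2) by blast
          have es: "E \<inter> S = {}" using EA b by blast
          show ?thesis unfolding u es card.empty by (rule scc_rec_empty)
        next
          case False
          then have S0: "S \<in> SCCS AR Att" using SCCS'_cases[OF S] by blast
          have SA: "S \<subseteq> AR" using SCCS_sub[OF S0] .
          have o: "E \<inter> S_out_minus AR' Att' S = E \<inter> S_out_minus AR Att S"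
            using EA SA sub old_att unfolding S_out_minus_def by blast
          have d: "D_set AR' Att' S E = D_set AR Att S E"
          proof -
            have "\<And>x e. x \<in> S \<Longrightarrow> e \<in> E \<Longrightarrow> (e, x) \<in> Att' \<longleftrightarrow> (e, x) \<in> Att"
              using old_att EA SA by blast
            then show ?thesis unfolding D_set_def o by blast
          qed
          have u: "UP_set AR' Att' S E = UP_set AR Att S E" unfolding UP_set_def d ..
          have r: "restr Att' (UP_set AR Att S E) = restr Att (UP_set AR Att S E)"
            using UP_sub[of AR Att S E] SA old_att unfolding restr_def by blast
          show ?thesis unfolding u r using scc_dec[OF f1 w1 lessI E S0] .
        qed
      qed
      then have "scc_rec base (Suc (card AR')) AR' Att' E" by (rule scc_intro[OF f2 lessI EA' c])
      then show ?thesis by blast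
    qed
  qed
qed

end


lemma B1_naive: "finite A \<Longrightarrow> At \<subseteq> A \<times> A \<Longrightarrow> \<exists>E. naive_ext A At E \<and> E \<subseteq> A"
proof -
  assume f: "finite A"
  define X where "X = {T. T \<subseteq> A \<and> conflict_free At T}"
  have fX: "finite X" unfolding X_def by (rule finite_subset[of _ "Pow A"]) (auto simp: f)
  have "{} \<in> X" unfolding X_def conflict_free_def by simp
  from finite_has_maximal2[OF fX this]
  obtain m where m: "m \<in> X" "\<forall>b\<in>X. m \<subseteq> b \<longrightarrow> m = b" by blast
  have "naive_ext A At m" unfolding naive_ext_def
  proof (intro conjI allI impI)
    show "m \<subseteq> A" "conflict_free At m" using m(1) unfolding X_def by auto
    fix T assume "T \<subseteq> A \<and> conflict_free At T \<and> m \<subseteq> T"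
    then show "T = m" using m(2) unfolding X_def by auto
  qed
  then show ?thesis unfolding naive_ext_def by blast
qed

lemma B3_naive: "naive_ext {x} {} F \<Longrightarrow> F = {x}"
  unfolding naive_ext_def conflict_free_def by blast

lemma B1_stage: "finite A \<Longrightarrow> At \<subseteq> A \<times> A \<Longrightarrow> \<exists>E. stage_ext A At E \<and> E \<subseteq> A"
proof -
  assume f: "finite A" and w: "At \<subseteq> A \<times> A"
  define X where "X = {T. T \<subseteq> A \<and> conflict_free At T}"
  have fX: "finite X" unfolding X_def by (rule finite_subset[of _ "Pow A"]) (auto simp: f)
  have "{} \<in> X" unfolding X_def conflict_free_def by simp
  define g where "g = (\<lambda>T. card (T \<union> plus At T))"
  define mx where "mx = Max (g ` X)"
  have "mx \<in> g ` X" unfolding mx_def using fX \<open>{} \<in> X\<close> by (intro Max_in) auto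
  then obtain T where TX: "T \<in> X" and Tm: "g T = mx" by blast
  have le: "\<And>Y. Y \<in> X \<Longrightarrow> g Y \<le> g T" unfolding Tm mx_def using fX by simp
  have "stage_ext A At T" unfolding stage_ext_def
  proof (intro conjI notI)
    show "T \<subseteq> A" "conflict_free At T" using TX unfolding X_def by auto
    assume "\<exists>T'. T' \<subseteq> A \<and> conflict_free At T' \<and> T \<union> plus At T \<subset> T' \<union> plus At T'"
    then obtain T' where T': "T' \<subseteq> A" "conflict_free At T'" "T \<union> plus At T \<subset> T' \<union> plus At T'" by blast
    have "finite (T' \<union> plus At T')" using T'(1) plus_sub[OF w] f finite_subset by (metis Un_least)
    then have "g T < g T'" unfolding g_def by (rule psubset_card_mono[OF _ T'(3)])
    moreover have "T' \<in> X" using T' unfolding X_def by blast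
    ultimately show False using le by fastforce
  qed
  then show ?thesis unfolding stage_ext_def by blast
qed

lemma B3_stage: "stage_ext {x} {} F \<Longrightarrow> F = {x}"
proof -
  assume F: "stage_ext {x} {} F"
  then have "F \<subseteq> {x}" unfolding stage_ext_def by blast
  moreover have "F \<noteq> {}"
  proof
    assume "F = {}"
    moreover have "conflict_free {} {x}" unfolding conflict_free_def by simp
    moreover have "F \<union> plus {} F \<subset> {x} \<union> plus {} {x}" unfolding plus_def \<open>F = {}\<close> by auto
    ultimately have "\<exists>T. T \<subseteq> {x} \<and> conflict_free {} T \<and> F \<union> plus {} F \<subset> T \<union> plus {} T" by blast
    then show False using F unfolding stage_ext_def by simp
  qed
  ultimately show "F = {x}" by blast
qed

lemma lift_gen:
  assumes "\<And>E. P E \<Longrightarrow> \<exists>E'. Q E' \<and> (\<not> E' \<subseteq> A \<or> E' = E)"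
  shows "\<forall>E \<in> {E. P E}. \<exists>E' \<in> {E. Q E}. (\<not> E' \<subseteq> A \<or> E' = E)"
proof
  fix E assume "E \<in> {E. P E}"
  then have "P E" by simp
  then obtain E' where "Q E'" "\<not> E' \<subseteq> A \<or> E' = E" using assms by blast
  then show "\<exists>E' \<in> {E. Q E}. (\<not> E' \<subseteq> A \<or> E' = E)" by blast
qed

theorem proposition44:
  fixes x :: semantics
    and AR AR' :: "'a set" and Att Att' :: "('a \<times> 'a) set"
  assumes "wf_AF AR Att" and "wf_AF AR' Att'"
    and "rm_expansion AR Att AR' Att'"
  shows "\<forall>E \<in> sigma x AR Att. \<exists>E' \<in> sigma x AR' Att'. (\<not> E' \<subseteq> AR \<or> E' = E)"
proof -
  interpret rmx AR Att AR' Att' using assms by unfold_locales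
  show ?thesis
  proof (cases x)
    case Complete
    show ?thesis unfolding sigma_def Complete ext_pred.simps by (rule lift_gen[OF thm_complete])
  next
    case Preferred
    show ?thesis unfolding sigma_def Preferred ext_pred.simps by (rule lift_gen[OF thm_preferred])
  next
    case SemiStable
    show ?thesis unfolding sigma_def SemiStable ext_pred.simps by (rule lift_gen[OF thm_semi])
  next
    case Stage
    show ?thesis unfolding sigma_def Stage ext_pred.simps by (rule lift_gen[OF thm_stage])
  next
    case Stage2
    show ?thesis unfolding sigma_def Stage2 ext_pred.simps stage2_ext_def
      by (rule lift_gen[OF thm_scc[where base=stage_ext, OF B1_stage B3_stage]])
  next
    case CF2
    show ?thesis unfolding sigma_def CF2 ext_pred.simps cf2_ext_def
      by (rule lift_gen[OF thm_scc[where base=naive_ext, OF B1_naive B3_naive]])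
  next
    case Grounded
    show ?thesis unfolding sigma_def Grounded ext_pred.simps by (rule lift_gen[OF thm_grounded])
  next
    case Ideal
    show ?thesis unfolding sigma_def Ideal ext_pred.simps by (rule lift_gen[OF thm_ideal])
  next
    case Eager
    show ?thesis unfolding sigma_def Eager ext_pred.simps by (rule lift_gen[OF thm_eager])
  qed
qed

end
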